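(* In the Com-IC model with $q_{\mathcal{A}|\emptyset}=q_{\mathcal{B}|\emptyset}=1$ (and arbitrary $q_{\mathcal{A}|\mathcal{B}},q_{\mathcal{B}|\mathcal{A}}\in[0,1]$), for any fixed $\mathcal{B}$-seed set $S_\mathcal{B}$ the set function $S_\mathcal{A}\mapsto\sigma_\mathcal{A}(S_\mathcal{A},S_\mathcal{B})$ is submodular.
   Context: Com-IC model. Let $G=(V,E,p)$ be a directed graph with $p:E\to[0,1]$ and $N^-(v)$ the in-neighbours of $v$. Two items $\mathcal{A},\mathcal{B}$; GAPs $\mathbf{Q}=(q_{\mathcal{A}|\emptyset},q_{\mathcal{A}|\mathcal{B}},q_{\mathcal{B}|\emptyset},q_{\mathcal{B}|\mathcal{A}})\in[0,1]^4$. Given seed sets $S_\mathcal{A},S_\mathcal{B}\subseteq V$, randomness: each edge $(u,v)$ independently live w.p. $p(u,v)$; each node $v$ independently draws $\alpha^v_\mathcal{A},\alpha^v_\mathcal{B}$ uniform on $[0,1]$, a uniformly random permutation $\pi_v$ of $N^-(v)$, and a fair coin $\tau_v\in\{\mathcal{A},\mathcal{B}\}$. For each item $X$ each node is $X$-idle, $X$-suspended, $X$-adopted or $X$-rejected; initially all idle. At step $0$ nodes of $S_\mathcal{A}$ become $\mathcal{A}$-adopted and nodes of $S_\mathcal{B}$ become $\mathcal{B}$-adopted (order for nodes in both given by $\tau_v$). At step $t\ge1$, $v$ is informed of $X$ by in-neighbour $u$ if $(u,v)$ is live and $u$ adopted $X$ at step $t-1$; informing in-neighbours are processed in order $\pi_v$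 (an in-neighbour that adopted both items is processed for both, in its adoption order). When $v$ is informed of $X$ ($Y$ the other item) while $X$-idle: if $Y$-adopted, $v$ becomes $X$-adopted if $\alpha^v_X\le q_{X|Y}$, else $X$-rejected; otherwise $X$-adopted if $\alpha^v_X\le q_{X|\emptyset}$, else $X$-suspended. Informing a non-$X$-idle node of $X$ has no effect. Reconsideration: when an $X$-suspended node becomes $Y$-adopted, it becomes $X$-adopted if $\alpha^v_X\le q_{X|Y}$, else $X$-rejected. The process stops when nothing changes. $\sigma_\mathcal{A}(S_\mathcal{A},S_\mathcal{B})$ is the expected final number of $\mathcal{A}$-adopted nodes. Submodular: $f(S\cup\{x\})-f(S)\ge f(T\cup\{x\})-f(T)$ for all $S\subseteq T\subseteq V$, $x\notin T$. *)

theory Defs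
  imports "HOL-Probability.Probability" "HOL-Combinatorics.Multiset_Permutations"
begin

datatype item = IA | IB

fun other :: "item \<Rightarrow> item" where
  "other IA = IB" | "other IB = IA"

datatype status = Idle | Suspended | Adopted | Rejected

text \<open>GAPs Q = (q_A|0, q_A|B, q_B|0, q_B|A).\<close>
type_synonym gaps = "real \<times> real \<times> real \<times> real"

fun q_none :: "gaps \<Rightarrow> item \<Rightarrow> real" where
  "q_none (a0, ab, b0, ba) IA = a0"
| "q_none (a0, ab, b0, ba) IB = b0"

fun q_cond :: "gaps \<Rightarrow> item \<Rightarrow> real" where
  "q_cond (a0, ab, b0, ba) IA = ab"
| "q_cond (a0, ab, b0, ba) IB = ba"

record nstate =
  st :: "item \<Rightarrow> status"
  atime :: "item \<Rightarrow> nat option"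
  aord :: "item list"

definition init_node :: nstate where
  "init_node = \<lparr>st = (\<lambda>_. Idle), atime = (\<lambda>_. None), aord = []\<rparr>"

definition adopt :: "nat \<Rightarrow> item \<Rightarrow> nstate \<Rightarrow> nstate" where
  "adopt t X s = s\<lparr>st := (st s)(X := Adopted), atime := (atime s)(X := Some t),
                    aord := aord s @ [X]\<rparr>"

definition set_status :: "item \<Rightarrow> status \<Rightarrow> nstate \<Rightarrow> nstate" where
  "set_status X c s = s\<lparr>st := (st s)(X := c)\<rparr>"

text \<open>Adoption of X at step t followed by reconsideration of a suspended other item.
  \<open>al\<close> is the node's pair of thresholds \<alpha>^v_A, \<alpha>^v_B.\<close>
definition adopt_recons :: "gaps \<Rightarrow> (item \<Rightarrow> real) \<Rightarrow> nat \<Rightarrow> item \<Rightarrow> nstate \<Rightarrow> nstate" where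
  "adopt_recons Q al t X s =
     (let s' = adopt t X s; Y = other X in
      if st s' Y = Suspended then
        (if al Y \<le> q_cond Q Y then adopt t Y s' else set_status Y Rejected s')
      else s')"

definition inform :: "gaps \<Rightarrow> (item \<Rightarrow> real) \<Rightarrow> nat \<Rightarrow> item \<Rightarrow> nstate \<Rightarrow> nstate" where
  "inform Q al t X s =
     (if st s X \<noteq> Idle then s
      else if st s (other X) = Adopted then
        (if al X \<le> q_cond Q X then adopt_recons Q al t X s else set_status X Rejected s)
      else
        (if al X \<le> q_none Q X then adopt_recons Q al t X s else set_status X Suspended s))"

text \<open>A possible world: live-edge predicate, thresholds \<alpha>, permutations \<pi>_v
  (as lists of in-neighbours), and coins \<tau>_v.\<close>
type_synonym 'v dworld = "(('v \<times> 'v) \<Rightarrow> bool) \<times> ('v \<Rightarrow> 'v list) \<times> ('v \<Rightarrow> item)"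
type_synonym 'v world = "'v dworld \<times> (item \<times> 'v \<Rightarrow> real)"

type_synonym 'v gstate = "'v \<Rightarrow> nstate"

definition seed_state :: "'v set \<Rightarrow> 'v set \<Rightarrow> ('v \<Rightarrow> item) \<Rightarrow> 'v gstate" where
  "seed_state SA SB tau v =
     (if v \<in> SA \<and> v \<in> SB then adopt 0 (other (tau v)) (adopt 0 (tau v) init_node)
      else if v \<in> SA then adopt 0 IA init_node
      else if v \<in> SB then adopt 0 IB init_node
      else init_node)"

definition informs :: "('v \<times> 'v \<Rightarrow> bool) \<Rightarrow> ('v \<Rightarrow> 'v list) \<Rightarrow> 'v gstate \<Rightarrow> nat \<Rightarrow> 'v \<Rightarrow> item list" where
  "informs live prm S t v =
     concat (map (\<lambda>u. if live (u, v) then filter (\<lambda>X. atime (S u) X = Some (t - 1)) (aord (S u)) else [])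
                 (prm v))"

definition step :: "gaps \<Rightarrow> 'v world \<Rightarrow> nat \<Rightarrow> 'v gstate \<Rightarrow> 'v gstate" where
  "step Q w t S v =
     (let ((live, prm, tau), alpha) = w in
      fold (inform Q (\<lambda>X. alpha (X, v)) t) (informs live prm S t v) (S v))"

fun run :: "gaps \<Rightarrow> 'v set \<Rightarrow> 'v set \<Rightarrow> 'v world \<Rightarrow> nat \<Rightarrow> 'v gstate" where
  "run Q SA SB w 0 = seed_state SA SB (snd (snd (fst w)))"
| "run Q SA SB w (Suc t) = step Q w (Suc t) (run Q SA SB w t)"

definition final_state :: "gaps \<Rightarrow> 'v set \<Rightarrow> 'v set \<Rightarrow> 'v world \<Rightarrow> 'v gstate" where
  "final_state Q SA SB w =
     run Q SA SB w (LEAST t. run Q SA SB w (Suc t) = run Q SA SB w t)"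

definition in_nbrs :: "('v \<times> 'v) set \<Rightarrow> 'v \<Rightarrow> 'v set" where
  "in_nbrs E v = {u. (u, v) \<in> E}"

definition dworld_pmf :: "('v::finite \<times> 'v) set \<Rightarrow> ('v \<times> 'v \<Rightarrow> real) \<Rightarrow> 'v dworld pmf" where
  "dworld_pmf E p =
     pair_pmf (Pi_pmf E False (\<lambda>e. bernoulli_pmf (p e)))
       (pair_pmf (Pi_pmf UNIV [] (\<lambda>v. pmf_of_set (permutations_of_set (in_nbrs E v))))
                 (Pi_pmf UNIV IA (\<lambda>v. pmf_of_set {IA, IB})))"

definition world_measure :: "('v::finite \<times> 'v) set \<Rightarrow> ('v \<times> 'v \<Rightarrow> real) \<Rightarrow> 'v world measure" where
  "world_measure E p =
     measure_pmf (dworld_pmf E p) \<Otimes>\<^sub>M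
       (\<Pi>\<^sub>M i\<in>(UNIV :: (item \<times> 'v) set). uniform_measure lborel {0..1})"

definition sigmaA :: "('v::finite \<times> 'v) set \<Rightarrow> ('v \<times> 'v \<Rightarrow> real) \<Rightarrow> gaps \<Rightarrow> 'v set \<Rightarrow> 'v set \<Rightarrow> real" where
  "sigmaA E p Q SA SB =
     (\<integral>w. real (card {v. st (final_state Q SA SB w v) IA = Adopted}) \<partial>world_measure E p)"

definition submodular :: "('a set \<Rightarrow> real) \<Rightarrow> bool" where
  "submodular f \<longleftrightarrow>
     (\<forall>S T x. S \<subseteq> T \<and> x \<notin> T \<longrightarrow> f (insert x S) - f S \<ge> f (insert x T) - f T)"

end

theory Submission
  imports Defs
begin


lemma other_other[simp]: "other (other X) = X" by (cases X) auto
lemma other_neq[simp]: "other X \<noteq> X" "X \<noteq> other X" by (cases X, auto)+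
lemma item_cases2: "X = IA \<or> X = IB" by (cases X) auto

lemma st_adopt[simp]: "st (adopt t X s) = (st s)(X := Adopted)" by (simp add: adopt_def)
lemma atime_adopt[simp]: "atime (adopt t X s) = (atime s)(X := Some t)" by (simp add: adopt_def)
lemma aord_adopt[simp]: "aord (adopt t X s) = aord s @ [X]" by (simp add: adopt_def)
lemma st_set_status[simp]: "st (set_status X c s) = (st s)(X := c)" by (simp add: set_status_def)
lemma atime_set_status[simp]: "atime (set_status X c s) = atime s" by (simp add: set_status_def)
lemma aord_set_status[simp]: "aord (set_status X c s) = aord s" by (simp add: set_status_def)

definition NS :: "gaps \<Rightarrow> (item \<Rightarrow> real) \<Rightarrow> nstate \<Rightarrow> bool" where
  "NS Q al s \<longleftrightarrow> (\<forall>X. st s X \<noteq> Suspended) \<and>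
     (\<forall>X. st s X = Rejected \<longrightarrow> st s (other X) = Adopted \<and> \<not> al X \<le> q_cond Q X) \<and>
     set (aord s) = {X. st s X = Adopted} \<and> distinct (aord s) \<and>
     (\<forall>X. (atime s X = None) = (st s X \<noteq> Adopted))"

lemma inform_simp:
  assumes "NS Q al s" "al X \<le> q_none Q X"
  shows "inform Q al t X s = (if st s X \<noteq> Idle then s
           else if st s (other X) = Adopted \<and> \<not> al X \<le> q_cond Q X then set_status X Rejected s
           else adopt t X s)"
  using assms unfolding inform_def adopt_recons_def NS_def Let_def by auto

lemma NS_inform:
  assumes "NS Q al s" "\<forall>X. al X \<le> q_none Q X"
  shows "NS Q al (inform Q al t X s)"
proof -
  have o: "\<And>Y. Y \<noteq> X \<Longrightarrow> Y = other X" by (metis item_cases2 other.simps)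
  show ?thesis using assms unfolding inform_simp[OF assms(1) assms(2)[rule_format]]
    by (auto simp: NS_def)
qed

lemma inform_nonidle_pres: "st s Z \<noteq> Idle \<Longrightarrow> st (inform Q al t X s) Z \<noteq> Idle"
  unfolding inform_def adopt_recons_def Let_def by auto

lemma inform_nonidle: "st (inform Q al t X s) X \<noteq> Idle"
  unfolding inform_def adopt_recons_def Let_def by auto

lemma fold_nonidle_pres: "st s Z \<noteq> Idle \<Longrightarrow> st (fold (inform Q al t) L s) Z \<noteq> Idle"
  by (induction L arbitrary: s) (auto simp: inform_nonidle_pres)

lemma fold_nonidle: "X \<in> set L \<Longrightarrow> st (fold (inform Q al t) L s) X \<noteq> Idle"
  by (induction L arbitrary: s) (auto simp: inform_nonidle fold_nonidle_pres)

lemma inform_changed: "inform Q al t X s \<noteq> s \<Longrightarrow> st s X = Idle"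
  unfolding inform_def by (auto split: if_splits)

lemma fold_changed: "fold (inform Q al t) L s \<noteq> s \<Longrightarrow> \<exists>X. st s X = Idle \<and> st (fold (inform Q al t) L s) X \<noteq> Idle"
proof (induction L arbitrary: s)
  case Nil then show ?case by simp
next
  case (Cons X L)
  show ?case
  proof (cases "inform Q al t X s = s")
    case True then show ?thesis using Cons by simp
  next
    case False
    then have "st s X = Idle" by (rule inform_changed)
    then show ?thesis using inform_nonidle fold_nonidle_pres by (metis fold_simps(2))
  qed
qed

lemma inform_atime: "atime (inform Q al t X s) Y = atime s Y \<or> atime (inform Q al t X s) Y = Some t"
  unfolding inform_def adopt_recons_def Let_def by auto

lemma fold_atime: "atime (fold (inform Q al t) L s) Y = atime s Y \<or> atime (fold (inform Q al t) L s) Y = Some t"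
  apply (induction L arbitrary: s)
   apply simp
  by (metis fold_simps(2) inform_atime)

lemma fold_concat_map: "fold f (concat (map g us)) s = fold (\<lambda>u. fold f (g u)) us s"
  by (induction us arbitrary: s) auto



definition gl :: "('v \<times> 'v \<Rightarrow> bool) \<Rightarrow> 'v gstate \<Rightarrow> nat \<Rightarrow> 'v \<Rightarrow> 'v \<Rightarrow> item list" where
  "gl live S t u v = (if live (u, v) then filter (\<lambda>X. atime (S u) X = Some t) (aord (S u)) else [])"

lemma step_Suc:
  "step Q ((live, prm, tau), alpha) (Suc t) S v =
     fold (\<lambda>u. fold (inform Q (\<lambda>X. alpha (X, v)) (Suc t)) (gl live S t u v)) (prm v) (S v)"
  proof -
  have e: "Suc t - 1 = t" by simp
  show ?thesis unfolding step_def informs_def gl_def fold_concat_map e by simp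
qed

lemma run_Suc': "run Q SA SB ((live, prm, tau), alpha) (Suc t) v =
   fold (\<lambda>u. fold (inform Q (\<lambda>X. alpha (X, v)) (Suc t)) (gl live (run Q SA SB ((live, prm, tau), alpha) t) t u v)) (prm v)
        (run Q SA SB ((live, prm, tau), alpha) t v)"
  by (simp add: step_Suc)
lemma fold_u_nonidle_pres: "st s Z \<noteq> Idle \<Longrightarrow> st (fold (\<lambda>u. fold (inform Q al t) (g u)) us s) Z \<noteq> Idle"
  by (induction us arbitrary: s) (auto simp: fold_nonidle_pres)

lemma fold_u_nonidle: "u \<in> set us \<Longrightarrow> X \<in> set (g u) \<Longrightarrow> st (fold (\<lambda>u. fold (inform Q al t) (g u)) us s) X \<noteq> Idle"
proof (induction us arbitrary: s)
  case Nil then show ?case by simp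
next
  case (Cons u' us)
  show ?case
  proof (cases "u' = u")
    case True
    then have "st (fold (inform Q al t) (g u') s) X \<noteq> Idle" using Cons.prems fold_nonidle by metis
    then show ?thesis unfolding fold_simps(2) by (rule fold_u_nonidle_pres)
  next
    case False
    then have "u \<in> set us" using Cons.prems by simp
    then show ?thesis unfolding fold_simps(2) using Cons.IH Cons.prems(2) by blast
  qed
qed

lemma fold_u_atime: "atime (fold (\<lambda>u. fold (inform Q al t) (g u)) us s) Y = atime s Y \<or>
     atime (fold (\<lambda>u. fold (inform Q al t) (g u)) us s) Y = Some t"
proof (induction us arbitrary: s)
  case Nil then show ?case by simp
next
  case (Cons u us)
  have a: "atime (fold (inform Q al t) (g u) s) Y = atime s Y \<or> atime (fold (inform Q al t) (g u) s) Y = Some t"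
    by (rule fold_atime)
  show ?case unfolding fold_simps(2) using Cons.IH[of "fold (inform Q al t) (g u) s"] a by auto
qed

lemma fold_u_changed: "fold (\<lambda>u. fold (inform Q al t) (g u)) us s \<noteq> s \<Longrightarrow>
   \<exists>X. st s X = Idle \<and> st (fold (\<lambda>u. fold (inform Q al t) (g u)) us s) X \<noteq> Idle"
proof (induction us arbitrary: s)
  case Nil then show ?case by simp
next
  case (Cons u us)
  show ?case
  proof (cases "fold (inform Q al t) (g u) s = s")
    case True then show ?thesis using Cons by simp
  next
    case False
    then obtain X where "st s X = Idle" "st (fold (inform Q al t) (g u) s) X \<noteq> Idle" using fold_changed by blast
    then show ?thesis unfolding fold_simps(2) using fold_u_nonidle_pres by blast
  qed
qed

lemma seed_atime: "atime (seed_state SA SB tau v) X = Some k \<Longrightarrow> k = 0"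
  unfolding seed_state_def init_node_def by (auto split: if_splits)


lemma run_atime_le: "atime (run Q SA SB w t v) X = Some k \<Longrightarrow> k \<le> t"
proof (induction t arbitrary: v k)
  case 0 then show ?case using seed_atime by (cases w) auto
next
  case (Suc t)
  obtain live prm tau alpha where w: "w = ((live, prm, tau), alpha)" by (metis prod.exhaust)
  have "atime (run Q SA SB w (Suc t) v) X = atime (run Q SA SB w t v) X \<or> atime (run Q SA SB w (Suc t) v) X = Some (Suc t)"
    unfolding w run_Suc' by (rule fold_u_atime)
  then show ?case using Suc.prems Suc.IH[of v k] by auto
qed

lemma run_stable:
  assumes "run Q SA SB w (Suc t) = run Q SA SB w t"
  shows "run Q SA SB w (Suc (Suc t)) = run Q SA SB w (Suc t)"
proof -
  obtain live prm tau alpha where w: "w = ((live, prm, tau), alpha)" by (metis prod.exhaust)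
  have g: "gl live (run Q SA SB w (Suc t)) (Suc t) u v = []" for u v
    unfolding gl_def assms using run_atime_le[of Q SA SB w t] by (force simp: filter_empty_conv)
  have f: "fold (\<lambda>u. fold (inform Q al (Suc (Suc t))) (gl live (run Q SA SB w (Suc t)) (Suc t) u v)) us s = s" for us s al v
    by (induction us arbitrary: s) (simp_all only: g fold_simps)
  have "run Q SA SB w (Suc (Suc t)) v = run Q SA SB w (Suc t) v" for v
    using f unfolding w run_Suc'[of Q SA SB live prm tau alpha "Suc t"] by (simp only: w[symmetric])
  then show ?thesis by auto
qed

lemma run_stable_k:
  assumes "run Q SA SB w (Suc t) = run Q SA SB w t"
  shows "run Q SA SB w (Suc (t + k)) = run Q SA SB w (t + k)"
proof (induction k)
  case 0 then show ?case using assms by simp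
next
  case (Suc k) then show ?case using run_stable[of Q SA SB w "t + k"] by simp
qed

lemma run_stable_from:
  assumes "run Q SA SB w (Suc t) = run Q SA SB w t"
  shows "run Q SA SB w (t + k) = run Q SA SB w t"
proof (induction k)
  case 0 then show ?case by simp
next
  case (Suc k) then show ?case using run_stable_k[OF assms, of k] by simp
qed


definition nidle where "nidle Q SA SB w t = {(v, X). st (run Q SA SB w t v) X \<noteq> Idle}"

lemma nidle_mono: "nidle Q SA SB w t \<subseteq> nidle Q SA SB w (Suc t)"
proof
  fix p assume p: "p \<in> nidle Q SA SB w t"
  obtain v X where pv: "p = (v, X)" by (cases p)
  obtain live prm tau alpha where w: "w = ((live, prm, tau), alpha)" by (metis prod.exhaust)
  have "st (run Q SA SB w t v) X \<noteq> Idle" using p pv unfolding nidle_def by simp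
  then have "st (run Q SA SB w (Suc t) v) X \<noteq> Idle"
    unfolding w run_Suc' by (rule fold_u_nonidle_pres)
  then show "p \<in> nidle Q SA SB w (Suc t)" unfolding nidle_def pv by simp
qed

lemma nidle_strict: "run Q SA SB w (Suc t) \<noteq> run Q SA SB w t \<Longrightarrow> nidle Q SA SB w t \<subset> nidle Q SA SB w (Suc t)"
proof -
  assume ne: "run Q SA SB w (Suc t) \<noteq> run Q SA SB w t"
  obtain live prm tau alpha where w: "w = ((live, prm, tau), alpha)" by (metis prod.exhaust)
  obtain v where v: "run Q SA SB w (Suc t) v \<noteq> run Q SA SB w t v" using ne by auto
  have "\<exists>X. st (run Q SA SB w t v) X = Idle \<and> st (run Q SA SB w (Suc t) v) X \<noteq> Idle"
    using v unfolding w run_Suc' by (rule fold_u_changed)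
  then obtain X where "st (run Q SA SB w t v) X = Idle" "st (run Q SA SB w (Suc t) v) X \<noteq> Idle" by blast
  then have "(v, X) \<in> nidle Q SA SB w (Suc t) - nidle Q SA SB w t" unfolding nidle_def by auto
  then show ?thesis using nidle_mono by blast
qed

lemma nidle_sub: "nidle Q SA SB w t \<subseteq> (UNIV :: 'v set) \<times> {IA, IB}"
  unfolding nidle_def using item_cases2 by auto

lemma nidle_card: "card (nidle Q SA SB (w :: 'v::finite world) t) \<le> 2 * CARD('v)"
proof -
  have "card (nidle Q SA SB w t) \<le> card ((UNIV :: 'v set) \<times> {IA, IB})" by (intro card_mono nidle_sub) auto
  then show ?thesis by (simp add: card_cartesian_product)
qed

lemma final_state_eq: "final_state Q SA SB (w :: 'v::finite world) = run Q SA SB w (2 * CARD('v))"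
proof -
  let ?N = "2 * CARD('v)"
  have ex: "\<exists>t\<le>?N. run Q SA SB w (Suc t) = run Q SA SB w t"
  proof (rule ccontr)
    assume "\<not> ?thesis"
    then have h: "\<And>t. t \<le> ?N \<Longrightarrow> run Q SA SB w (Suc t) \<noteq> run Q SA SB w t" by auto
    have "t \<le> Suc ?N \<Longrightarrow> card (nidle Q SA SB w t) \<ge> t" for t
    proof (induction t)
      case 0 then show ?case by simp
    next
      case (Suc t)
      then have "nidle Q SA SB w t \<subset> nidle Q SA SB w (Suc t)" using h nidle_strict by (metis Suc_leD Suc_le_mono)
      moreover have "finite (nidle Q SA SB w (Suc t))"
        by (rule finite_subset[OF nidle_sub]) simp
      ultimately have "card (nidle Q SA SB w t) < card (nidle Q SA SB w (Suc t))"
        by (simp add: psubset_card_mono)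
      then show ?case using Suc by simp
    qed
    from this[of "Suc ?N"] nidle_card[of Q SA SB w "Suc ?N"] show False by simp
  qed
  then obtain t0 where t0: "t0 \<le> ?N" "run Q SA SB w (Suc t0) = run Q SA SB w t0" by blast
  let ?L = "LEAST t. run Q SA SB w (Suc t) = run Q SA SB w t"
  have L: "run Q SA SB w (Suc ?L) = run Q SA SB w ?L" by (rule LeastI[of _ t0]) (rule t0(2))
  have "?L \<le> t0" by (rule Least_le) (rule t0(2))
  then have "?N = ?L + (?N - ?L)" using t0(1) by simp
  then have "run Q SA SB w ?N = run Q SA SB w ?L" using run_stable_from[OF L, of "?N - ?L"] by simp
  then show ?thesis unfolding final_state_def by simp
qed



definition NSt :: "gaps \<Rightarrow> (item \<Rightarrow> real) \<Rightarrow> nat \<Rightarrow> nstate \<Rightarrow> bool" where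
  "NSt Q al t s \<longleftrightarrow> NS Q al s \<and> (\<forall>X k. atime s X = Some k \<longrightarrow> k \<le> t) \<and>
     (\<forall>X Y. aord s = [X, Y] \<longrightarrow> the (atime s X) \<le> the (atime s Y))"

lemma NSt_mono: "NSt Q al t s \<Longrightarrow> t \<le> t' \<Longrightarrow> NSt Q al t' s"
  unfolding NSt_def by force

lemma NS_aord_cases: "NS Q al s \<Longrightarrow> aord s = [] \<or> (\<exists>X. aord s = [X]) \<or> (\<exists>X. aord s = [X, other X])"
proof -
  assume ns: "NS Q al s"
  then have d: "distinct (aord s)" unfolding NS_def by simp
  have sub: "set (aord s) \<subseteq> {IA, IB}" using item_cases2 by auto
  have "length (aord s) = card (set (aord s))" using d by (simp add: distinct_card)
  also have "\<dots> \<le> 2" using card_mono[OF _ sub] by simp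
  finally have le: "length (aord s) \<le> 2" .
  show ?thesis
  proof (cases "aord s")
    case Nil then show ?thesis by simp
  next
    case (Cons X xs)
    show ?thesis
    proof (cases xs)
      case Nil then show ?thesis using Cons by simp
    next
      case (Cons Y ys)
      then have "ys = []" using le \<open>aord s = X # xs\<close> by simp
      moreover have "Y \<noteq> X" using d \<open>aord s = X # xs\<close> Cons by auto
      then have "Y = other X" by (metis item_cases2 other.simps)
      ultimately show ?thesis using \<open>aord s = X # xs\<close> Cons by simp
    qed
  qed
qed

lemma NSt_inform:
  assumes "NSt Q al t s" "\<forall>X. al X \<le> q_none Q X"
  shows "NSt Q al t (inform Q al t X s)"
proof -
  have ns: "NS Q al s" using assms(1) unfolding NSt_def by simp
  have ns': "NS Q al (inform Q al t X s)" by (rule NS_inform[OF ns assms(2)])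
  have at: "\<forall>Y k. atime (inform Q al t X s) Y = Some k \<longrightarrow> k \<le> t"
    using assms(1) inform_atime[of Q al t X s] unfolding NSt_def by (metis option.inject order_refl)
  have so: "\<forall>Y Z. aord (inform Q al t X s) = [Y, Z] \<longrightarrow> the (atime (inform Q al t X s) Y) \<le> the (atime (inform Q al t X s) Z)"
  proof (intro allI impI)
    fix Y Z assume a: "aord (inform Q al t X s) = [Y, Z]"
    show "the (atime (inform Q al t X s) Y) \<le> the (atime (inform Q al t X s) Z)"
    proof (cases "st s X \<noteq> Idle \<or> (st s (other X) = Adopted \<and> \<not> al X \<le> q_cond Q X)")
      case True
      then have "atime (inform Q al t X s) = atime s" "aord (inform Q al t X s) = aord s"
        unfolding inform_simp[OF ns assms(2)[rule_format]] by auto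
      then show ?thesis using a assms(1) unfolding NSt_def by auto
    next
      case False
      then have e: "inform Q al t X s = adopt t X s" unfolding inform_simp[OF ns assms(2)[rule_format]] by auto
      have "X \<notin> set (aord s)" using False ns unfolding NS_def by auto
      then have "aord s = [Y]" "Z = X" using a unfolding e by (auto simp: append_eq_Cons_conv)
      moreover have "Y \<noteq> X" using calculation \<open>X \<notin> set (aord s)\<close> by auto
      moreover have "atime s Y \<noteq> None" using ns calculation(1) unfolding NS_def by auto
      ultimately show ?thesis unfolding e using assms(1) unfolding NSt_def by auto
    qed
  qed
  show ?thesis using ns' at so unfolding NSt_def by blast
qed

lemma NSt_fold: "NSt Q al t s \<Longrightarrow> \<forall>X. al X \<le> q_none Q X \<Longrightarrow> NSt Q al t (fold (inform Q al t) L s)"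
  by (induction L arbitrary: s) (simp_all add: NSt_inform)

lemma NSt_fold_u: "NSt Q al t s \<Longrightarrow> \<forall>X. al X \<le> q_none Q X \<Longrightarrow> NSt Q al t (fold (\<lambda>u. fold (inform Q al t) (g u)) us s)"
  by (induction us arbitrary: s) (simp_all add: NSt_fold)

definition WF :: "gaps \<Rightarrow> ('v \<times> 'v \<Rightarrow> bool) \<Rightarrow> ('v \<Rightarrow> 'v list) \<Rightarrow> (item \<times> 'v \<Rightarrow> real) \<Rightarrow> 'v gstate \<Rightarrow> nat \<Rightarrow> bool" where
  "WF Q live prm alpha S t \<longleftrightarrow> (\<forall>v. NSt Q (\<lambda>X. alpha (X, v)) t (S v)) \<and>
     (\<forall>u z X k. live (u, z) \<and> u \<in> set (prm z) \<and> atime (S u) X = Some k \<and> k < t \<longrightarrow> st (S z) X \<noteq> Idle)"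

lemma NS_init: "NS Q al init_node" unfolding NS_def init_node_def by simp

lemma NSt_seed: "NSt Q al 0 (seed_state SA SB tau v)"
proof -
  have o: "\<And>X. other X \<noteq> X" by simp
  show ?thesis unfolding NSt_def NS_def seed_state_def init_node_def
    using item_cases2 by (auto simp: o)
qed

lemma WF_0: "WF Q live prm alpha (run Q SA SB ((live, prm, tau), alpha) 0) 0"
  unfolding WF_def by (simp add: NSt_seed)

lemma WF_Suc:
  assumes wf: "WF Q live prm alpha (run Q SA SB ((live, prm, tau), alpha) t) t"
    and ok: "\<forall>X v. alpha (X, v) \<le> q_none Q X"
  shows "WF Q live prm alpha (run Q SA SB ((live, prm, tau), alpha) (Suc t)) (Suc t)"
proof -
  let ?w = "((live, prm, tau), alpha)"
  let ?S = "run Q SA SB ?w t"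
  have a: "NSt Q (\<lambda>X. alpha (X, v)) (Suc t) (run Q SA SB ?w (Suc t) v)" for v
    unfolding run_Suc' by (rule NSt_fold_u) (use wf ok NSt_mono[where t=t and t'="Suc t"] in \<open>auto simp: WF_def\<close>)
  have b: "st (run Q SA SB ?w (Suc t) z) X \<noteq> Idle"
    if h: "live (u, z)" "u \<in> set (prm z)" "atime (run Q SA SB ?w (Suc t) u) X = Some k" "k < Suc t" for u z X k
  proof -
    have "atime (?S u) X = Some k \<or> k = Suc t"
      using fold_u_atime[of Q "\<lambda>Y. alpha (Y, u)" "Suc t" "\<lambda>u'. gl live ?S t u' u" "prm u" "?S u" X] h(3)
      unfolding run_Suc' by auto
    then have k: "atime (?S u) X = Some k" using h(4) by simp
    show ?thesis
    proof (cases "k < t")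
      case True
      then have "st (?S z) X \<noteq> Idle" using wf h k unfolding WF_def by blast
      then show ?thesis unfolding run_Suc' by (rule fold_u_nonidle_pres)
    next
      case False
      then have kt: "k = t" using h(4) by simp
      have "NS Q (\<lambda>Y. alpha (Y, u)) (?S u)" using wf unfolding WF_def NSt_def by simp
      then have "X \<in> set (aord (?S u))" using k unfolding NS_def by (metis (mono_tags, lifting) mem_Collect_eq option.distinct(1))
      then have "X \<in> set (gl live ?S t u z)" unfolding gl_def using h(1) k kt by simp
      then show ?thesis unfolding run_Suc' by (rule fold_u_nonidle[OF h(2)])
    qed
  qed
  show ?thesis unfolding WF_def using a b by blast
qed

lemma WF_run:
  assumes ok: "\<forall>X v. alpha (X, v) \<le> q_none Q X"
  shows "WF Q live prm alpha (run Q SA SB ((live, prm, tau), alpha) t) t"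
proof (induction t)
  case 0 show ?case by (rule WF_0)
next
  case (Suc t) show ?case by (rule WF_Suc[OF Suc.IH ok])
qed



definition Hd :: "nstate \<Rightarrow> nstate \<Rightarrow> bool" where
  "Hd s m \<longleftrightarrow> st m IA = Adopted \<and> (st m IB = Idle \<or> (st m IB = Adopted \<and> aord m = [IA, IB])) \<and>
     (st s IB = Adopted \<longrightarrow> aord s = [IA, IB])"

definition Hrel :: "nstate \<Rightarrow> nstate \<Rightarrow> bool" where
  "Hrel s m \<longleftrightarrow> st s IA = st m IA \<and> atime s IA = atime m IA \<and> (s = m \<or> Hd s m)"

lemma NS_A_only: "NS Q al s \<Longrightarrow> st s IA = Adopted \<Longrightarrow> st s IB \<noteq> Adopted \<Longrightarrow> aord s = [IA]"
proof -
  assume ns: "NS Q al s" and a: "st s IA = Adopted" "st s IB \<noteq> Adopted"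
  have "X \<in> set (aord s) \<longleftrightarrow> X = IA" for X using ns a unfolding NS_def by (cases X) auto
  then have m: "\<And>X. X \<in> set (aord s) \<Longrightarrow> X = IA" "IA \<in> set (aord s)" by auto
  from NS_aord_cases[OF ns] show ?thesis
  proof (elim disjE exE)
    assume "aord s = []" then show ?thesis using m(2) by simp
  next
    fix X assume "aord s = [X]" then show ?thesis using m(2) by simp
  next
    fix X assume h: "aord s = [X, other X]"
    then have "X = IA" "other X = IA" using m(1) by simp_all
    then show ?thesis by simp
  qed
qed

lemma NS_A_nonidle: "NS Q al s \<Longrightarrow> st s IA \<noteq> Idle \<Longrightarrow> st s IA = Adopted \<or> st s IB = Adopted"
  unfolding NS_def by (cases "st s IA") auto

locale hctx =
  fixes Q :: gaps and alr alm :: "item \<Rightarrow> real"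
  assumes okr: "\<forall>X. alr X \<le> q_none Q X" and okm: "\<forall>X. alm X \<le> q_none Q X"
    and eqA: "alm IA = alr IA" and accB: "alm IB \<le> q_cond Q IB"
begin

lemma H1A:
  assumes "Hrel s m" "NS Q alr s" "NS Q alm m"
  shows "Hrel (inform Q alr t IA s) (inform Q alm t IA m)"
proof -
  have r: "inform Q alr t IA s = (if st s IA \<noteq> Idle then s
           else if st s IB = Adopted \<and> \<not> alr IA \<le> q_cond Q IA then set_status IA Rejected s
           else adopt t IA s)" using inform_simp[OF assms(2), of IA] okr by simp
  have m: "inform Q alm t IA m = (if st m IA \<noteq> Idle then m
           else if st m IB = Adopted \<and> \<not> alm IA \<le> q_cond Q IA then set_status IA Rejected m
           else adopt t IA m)" using inform_simp[OF assms(3), of IA] okm by simp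
  show ?thesis
  proof (cases "s = m")
    case True then show ?thesis using r m eqA assms(1) unfolding Hrel_def by simp
  next
    case False
    then have "Hd s m" using assms(1) unfolding Hrel_def by auto
    then have "st s IA \<noteq> Idle" "st m IA \<noteq> Idle" using assms(1) unfolding Hd_def Hrel_def by auto
    then have "inform Q alr t IA s = s" "inform Q alm t IA m = m" using r m by auto
    then show ?thesis using assms(1) by simp
  qed
qed

lemma H1B:
  assumes "Hrel s m" "NS Q alr s" "NS Q alm m"
  shows "Hrel (inform Q alr t IB s) (inform Q alm t IB m)"
proof -
  have r: "inform Q alr t IB s = (if st s IB \<noteq> Idle then s
           else if st s IA = Adopted \<and> \<not> alr IB \<le> q_cond Q IB then set_status IB Rejected s
           else adopt t IB s)" using inform_simp[OF assms(2), of IB] okr by simp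
  have m: "inform Q alm t IB m = (if st m IB \<noteq> Idle then m else adopt t IB m)"
    using inform_simp[OF assms(3), of IB] okm accB by simp
  show ?thesis
  proof (cases "s = m")
    case True
    show ?thesis
    proof (cases "st s IB = Idle \<and> st s IA = Adopted \<and> \<not> alr IB \<le> q_cond Q IB")
      case True
      then have "aord m = [IA]" using NS_A_only[OF assms(3)] \<open>s = m\<close> by auto
      then show ?thesis using r m True \<open>s = m\<close> unfolding Hrel_def Hd_def by auto
    next
      case False then show ?thesis using r m \<open>s = m\<close> unfolding Hrel_def by auto
    qed
  next
    case False
    then have d: "Hd s m" "st s IA = st m IA" "atime s IA = atime m IA" using assms(1) unfolding Hrel_def by auto
    have am: "st m IB \<noteq> Adopted \<Longrightarrow> aord m = [IA]" using NS_A_only[OF assms(3)] d unfolding Hd_def by auto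
    have as: "st s IB \<noteq> Adopted \<Longrightarrow> aord s = [IA]" using NS_A_only[OF assms(2)] d unfolding Hd_def by auto
    show ?thesis using r m d am as unfolding Hrel_def Hd_def by auto
  qed
qed

lemma H1: "Hrel s m \<Longrightarrow> NS Q alr s \<Longrightarrow> NS Q alm m \<Longrightarrow> Hrel (inform Q alr t X s) (inform Q alm t X m)"
  by (cases X) (simp_all add: H1A H1B)

lemma H2r:
  assumes "Hrel s m" "NS Q alr s" "NS Q alm m" "st s IA \<noteq> Idle"
  shows "Hrel (inform Q alr t IB s) m"
proof -
  have r: "inform Q alr t IB s = (if st s IB \<noteq> Idle then s
           else if st s IA = Adopted \<and> \<not> alr IB \<le> q_cond Q IB then set_status IB Rejected s
           else adopt t IB s)" using inform_simp[OF assms(2), of IB] okr by simp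
  show ?thesis
  proof (cases "st s IB = Idle")
    case False then show ?thesis using r assms(1) by simp
  next
    case True
    then have aA: "st s IA = Adopted" using NS_A_nonidle[OF assms(2) assms(4)] by simp
    have as: "aord s = [IA]" using NS_A_only[OF assms(2) aA] True by simp
    have "st m IA = Adopted" "atime s IA = atime m IA" using assms(1) aA unfolding Hrel_def by auto
    moreover have "st m IB = Idle \<or> (st m IB = Adopted \<and> aord m = [IA, IB])"
      using assms(1) True unfolding Hrel_def Hd_def by auto
    ultimately show ?thesis using r True aA as unfolding Hrel_def Hd_def by auto
  qed
qed

lemma H2m:
  assumes "Hrel s m" "NS Q alr s" "NS Q alm m" "st m IA \<noteq> Idle"
  shows "Hrel s (inform Q alm t IB m)"
proof -
  have m: "inform Q alm t IB m = (if st m IB \<noteq> Idle then m else adopt t IB m)"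
    using inform_simp[OF assms(3), of IB] okm accB by simp
  show ?thesis
  proof (cases "st m IB = Idle")
    case False then show ?thesis using m assms(1) by simp
  next
    case True
    then have aA: "st m IA = Adopted" using NS_A_nonidle[OF assms(3) assms(4)] by simp
    have am: "aord m = [IA]" using NS_A_only[OF assms(3) aA] True by simp
    have "st s IA = Adopted" "atime s IA = atime m IA" using assms(1) aA unfolding Hrel_def by auto
    moreover have "st s IB = Adopted \<longrightarrow> aord s = [IA, IB]"
      using assms(1) True unfolding Hrel_def Hd_def by auto
    ultimately show ?thesis using m True aA am unfolding Hrel_def Hd_def by auto
  qed
qed


lemma NS_fold: "NS Q alr s \<Longrightarrow> NS Q alr (fold (inform Q alr t) L s)"
  using okr by (induction L arbitrary: s) (simp_all add: NS_inform)

lemma NS_fold_m: "NS Q alm s \<Longrightarrow> NS Q alm (fold (inform Q alm t) L s)"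
  using okm by (induction L arbitrary: s) (simp_all add: NS_inform)

lemma H_same: "Hrel s m \<Longrightarrow> NS Q alr s \<Longrightarrow> NS Q alm m \<Longrightarrow> Hrel (fold (inform Q alr t) L s) (fold (inform Q alm t) L m)"
proof (induction L arbitrary: s m)
  case Nil then show ?case by simp
next
  case (Cons X L)
  show ?case unfolding fold_simps(2)
    by (rule Cons.IH[OF H1[OF Cons.prems]]) (use Cons.prems okr okm NS_inform in auto)
qed

lemma H_B:
  assumes "Hrel s m" "NS Q alr s" "NS Q alm m" "st s IA \<noteq> Idle"
    and "L1 = [] \<or> L1 = [IB]" "L2 = [] \<or> L2 = [IB]"
  shows "Hrel (fold (inform Q alr t) L1 s) (fold (inform Q alm t) L2 m)"
proof -
  have sm: "st m IA \<noteq> Idle" using assms(1,4) unfolding Hrel_def by simp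
  show ?thesis using assms(5,6)
  proof (elim disjE)
    assume "L1 = []" "L2 = []" then show ?thesis using assms(1) by simp
  next
    assume "L1 = []" "L2 = [IB]" then show ?thesis using H2m[OF assms(1-3) sm] by simp
  next
    assume "L1 = [IB]" "L2 = []" then show ?thesis using H2r[OF assms(1-4)] by simp
  next
    assume "L1 = [IB]" "L2 = [IB]" then show ?thesis using H1[OF assms(1-3)] by simp
  qed
qed

lemma H_u:
  assumes rel: "Hrel s m" "NS Q alr s" "NS Q alm m"
    and relu: "Hrel su mu" "NS Q a1 su" "NS Q a2 mu"
    and ni: "atime su IA \<noteq> None \<Longrightarrow> atime su IA \<noteq> Some t \<Longrightarrow> st s IA \<noteq> Idle"
  shows "Hrel (fold (inform Q alr t') (filter (\<lambda>X. atime su X = Some t) (aord su)) s)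
              (fold (inform Q alm t') (filter (\<lambda>X. atime mu X = Some t) (aord mu)) m)"
proof (cases "su = mu")
  case True then show ?thesis using H_same[OF rel] by simp
next
  case False
  then have d: "Hd su mu" "st su IA = st mu IA" "atime su IA = atime mu IA" using relu(1) unfolding Hrel_def by auto
  have aA: "st su IA = Adopted" "st mu IA = Adopted" using d unfolding Hd_def by auto
  have os: "aord su = [IA] \<or> aord su = [IA, IB]"
    using NS_A_only[OF relu(2) aA(1)] d(1) unfolding Hd_def by auto
  have om: "aord mu = [IA] \<or> aord mu = [IA, IB]"
    using NS_A_only[OF relu(3) aA(2)] d(1) unfolding Hd_def by auto
  have tn: "atime su IA \<noteq> None" using relu(2) aA(1) unfolding NS_def by auto
  let ?f1 = "filter (\<lambda>X. atime su X = Some t)" and ?f2 = "filter (\<lambda>X. atime mu X = Some t)"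
  show ?thesis
  proof (cases "atime su IA = Some t")
    case True
    then have e1: "?f1 (aord su) = IA # ?f1 (filter (\<lambda>X. X = IB) (aord su))" using os by auto
    have e2: "?f2 (aord mu) = IA # ?f2 (filter (\<lambda>X. X = IB) (aord mu))" using om True d(3) by auto
    let ?s1 = "inform Q alr t' IA s" and ?m1 = "inform Q alm t' IA m"
    have r1: "Hrel ?s1 ?m1" by (rule H1[OF rel])
    have n1: "NS Q alr ?s1" "NS Q alm ?m1" using rel okr okm NS_inform by auto
    have i1: "st ?s1 IA \<noteq> Idle" by (rule inform_nonidle)
    have "?f1 (filter (\<lambda>X. X = IB) (aord su)) = [] \<or> ?f1 (filter (\<lambda>X. X = IB) (aord su)) = [IB]"
      using os by auto
    moreover have "?f2 (filter (\<lambda>X. X = IB) (aord mu)) = [] \<or> ?f2 (filter (\<lambda>X. X = IB) (aord mu)) = [IB]"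
      using om by auto
    ultimately show ?thesis unfolding e1 e2 fold_simps(2) using H_B[OF r1 n1 i1] by blast
  next
    case False
    then have i: "st s IA \<noteq> Idle" using ni tn by simp
    have "?f1 (aord su) = [] \<or> ?f1 (aord su) = [IB]" using os False by auto
    moreover have "?f2 (aord mu) = [] \<or> ?f2 (aord mu) = [IB]" using om False d(3) by auto
    ultimately show ?thesis using H_B[OF rel i] by blast
  qed
qed


lemma H_us:
  assumes "Hrel s m" "NS Q alr s" "NS Q alm m"
    and "\<forall>u\<in>set us. Hrel (R u) (M u) \<and> NS Q (ar u) (R u) \<and> NS Q (am u) (M u)"
    and "\<forall>u\<in>set us. lv u \<longrightarrow> atime (R u) IA \<noteq> None \<longrightarrow> atime (R u) IA \<noteq> Some t \<longrightarrow> st s IA \<noteq> Idle"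
  shows "Hrel (fold (\<lambda>u. fold (inform Q alr t') (if lv u then filter (\<lambda>X. atime (R u) X = Some t) (aord (R u)) else [])) us s)
              (fold (\<lambda>u. fold (inform Q alm t') (if lv u then filter (\<lambda>X. atime (M u) X = Some t) (aord (M u)) else [])) us m)"
  using assms
proof (induction us arbitrary: s m)
  case Nil then show ?case by simp
next
  case (Cons u us)
  let ?s1 = "fold (inform Q alr t') (if lv u then filter (\<lambda>X. atime (R u) X = Some t) (aord (R u)) else []) s"
  let ?m1 = "fold (inform Q alm t') (if lv u then filter (\<lambda>X. atime (M u) X = Some t) (aord (M u)) else []) m"
  have r1: "Hrel ?s1 ?m1"
  proof (cases "lv u")
    case True
    show ?thesis using True H_u[OF Cons.prems(1-3), of "R u" "M u" "ar u" "am u" t t'] Cons.prems(4,5) by simp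
  next
    case False then show ?thesis using Cons.prems(1) by simp
  qed
  have n1: "NS Q alr ?s1" "NS Q alm ?m1" using Cons.prems(2,3) NS_fold NS_fold_m by auto
  have i1: "\<forall>u\<in>set us. lv u \<longrightarrow> atime (R u) IA \<noteq> None \<longrightarrow> atime (R u) IA \<noteq> Some t \<longrightarrow> st ?s1 IA \<noteq> Idle"
    using Cons.prems(5) fold_nonidle_pres by (metis list.set_intros(2))
  show ?case unfolding fold_simps(2) using Cons.IH[OF r1 n1 _ i1] Cons.prems(4) by simp
qed

end

lemma Hrel_refl: "Hrel s s" unfolding Hrel_def by simp

lemma H_run:
  assumes okr: "\<forall>X v. alpha (X, v) \<le> q_none Q X" and okm: "\<forall>X v. alpham (X, v) \<le> q_none Q X"
    and eqA: "\<forall>v. alpham (IA, v) = alpha (IA, v)" and accB: "\<forall>v. alpham (IB, v) \<le> q_cond Q IB"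
  shows "Hrel (run Q SA SB ((live, prm, tau), alpha) t v) (run Q SA SB ((live, prm, tau), alpham) t v)"
proof (induction t arbitrary: v)
  case 0 show ?case by (simp add: Hrel_refl)
next
  case (Suc t)
  let ?R = "run Q SA SB ((live, prm, tau), alpha) t" and ?M = "run Q SA SB ((live, prm, tau), alpham) t"
  have wr: "WF Q live prm alpha ?R t" by (rule WF_run[OF okr])
  have wm: "WF Q live prm alpham ?M t" by (rule WF_run[OF okm])
  interpret hctx Q "\<lambda>X. alpha (X, v)" "\<lambda>X. alpham (X, v)"
    by unfold_locales (use okr okm eqA accB in auto)
  have gle: "gl live S t u v = (if live (u, v) then filter (\<lambda>X. atime (S u) X = Some t) (aord (S u)) else [])" for S u
    unfolding gl_def by simp
  have ni: "\<forall>u\<in>set (prm v). live (u, v) \<longrightarrow> atime (?R u) IA \<noteq> None \<longrightarrow> atime (?R u) IA \<noteq> Some t \<longrightarrow> st (?R v) IA \<noteq> Idle"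
  proof (intro ballI impI)
    fix u assume h: "u \<in> set (prm v)" "live (u, v)" "atime (?R u) IA \<noteq> None" "atime (?R u) IA \<noteq> Some t"
    then obtain k where k: "atime (?R u) IA = Some k" by auto
    then have "k \<le> t" using wr unfolding WF_def NSt_def by blast
    then have "k < t" using k h(4) by (cases "k = t") auto
    then show "st (?R v) IA \<noteq> Idle" using wr h k unfolding WF_def by blast
  qed
  have nsr: "\<And>v. NS Q (\<lambda>X. alpha (X, v)) (?R v)" using wr unfolding WF_def NSt_def by blast
  have nsm: "\<And>v. NS Q (\<lambda>X. alpham (X, v)) (?M v)" using wm unfolding WF_def NSt_def by blast
  show ?case unfolding run_Suc' gle
    by (rule H_us[OF Suc.IH nsr nsm _ ni, of _ "\<lambda>u X. alpha (X, u)" "\<lambda>u X. alpham (X, u)"]) (use Suc.IH nsr nsm in auto)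
qed



lemma NS_adopted_iff: "NS Q a s \<Longrightarrow> (atime s X \<noteq> None) = (st s X = Adopted)"
  unfolding NS_def by auto

definition flag :: "nstate \<Rightarrow> nat" where
  "flag s = (if st s IB = Adopted \<and> atime s IB = atime s IA \<and> aord s = [IB, IA] then 1 else 0)"

definition key :: "nstate \<Rightarrow> nat option" where
  "key s = (if st s IA = Adopted then Some (2 * the (atime s IA) + flag s) else None)"

fun ole :: "nat option \<Rightarrow> nat option \<Rightarrow> bool" where
  "ole _ None = True"
| "ole None (Some _) = False"
| "ole (Some x) (Some y) = (x \<le> y)"

lemma ole_refl[simp]: "ole x x" by (cases x) auto

lemma ole_trans: "ole x y \<Longrightarrow> ole y z \<Longrightarrow> ole x z"
  by (cases x; cases y; cases z) auto

definition Bq :: "nstate \<Rightarrow> nstate \<Rightarrow> bool" where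
  "Bq s1 s2 \<longleftrightarrow> st s1 IB = st s2 IB \<and> atime s1 IB = atime s2 IB"

definition Mo :: "nstate \<Rightarrow> nstate \<Rightarrow> bool" where
  "Mo s1 s2 \<longleftrightarrow> Bq s1 s2 \<and> ole (key s1) (key s2) \<and> (st s1 IA = Idle \<longrightarrow> st s2 IA = Idle) \<and>
     (st s1 IA = Rejected \<longrightarrow> st s2 IA \<noteq> Adopted)"

lemma Mo_refl: "Mo s s" unfolding Mo_def Bq_def by simp

lemma NS_B_only: "NS Q al s \<Longrightarrow> st s IA \<noteq> Adopted \<Longrightarrow> st s IB = Adopted \<Longrightarrow> aord s = [IB]"
proof -
  assume ns: "NS Q al s" and a: "st s IA \<noteq> Adopted" "st s IB = Adopted"
  have "X \<in> set (aord s) \<longleftrightarrow> X = IB" for X using ns a unfolding NS_def by (cases X) auto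
  then have m: "\<And>X. X \<in> set (aord s) \<Longrightarrow> X = IB" "IB \<in> set (aord s)" by auto
  from NS_aord_cases[OF ns] show ?thesis
  proof (elim disjE exE)
    assume "aord s = []" then show ?thesis using m(2) by simp
  next
    fix X assume "aord s = [X]" then show ?thesis using m(2) by simp
  next
    fix X assume h: "aord s = [X, other X]"
    then have "X = IB" "other X = IB" using m(1) by simp_all
    then show ?thesis by simp
  qed
qed

lemma NS_none: "NS Q al s \<Longrightarrow> st s IA \<noteq> Adopted \<Longrightarrow> st s IB \<noteq> Adopted \<Longrightarrow> aord s = []"
proof -
  assume ns: "NS Q al s" and a: "st s IA \<noteq> Adopted" "st s IB \<noteq> Adopted"
  have "X \<notin> set (aord s)" for X using ns a unfolding NS_def by (cases X) auto
  then show ?thesis by (cases "aord s") auto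
qed

lemma idle_eq:
  assumes "NS Q al s1" "NS Q al' s2" "Bq s1 s2" "st s1 IA = Idle" "st s2 IA = Idle"
  shows "s1 = s2"
proof -
  have st: "st s1 = st s2"
  proof
    fix X show "st s1 X = st s2 X" using assms(3-5) unfolding Bq_def by (cases X) auto
  qed
  have at: "atime s1 = atime s2"
  proof
    fix X show "atime s1 X = atime s2 X"
    proof (cases X)
      case IA
      then have "atime s1 X = None" "atime s2 X = None" using assms(1,2,4,5) unfolding NS_def by auto
      then show ?thesis by simp
    next
      case IB then show ?thesis using assms(3) unfolding Bq_def by simp
    qed
  qed
  have ao: "aord s1 = aord s2"
  proof (cases "st s1 IB = Adopted")
    case True
    then show ?thesis using NS_B_only[OF assms(1)] NS_B_only[OF assms(2)] assms(3-5) unfolding Bq_def by simp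
  next
    case False
    then show ?thesis using NS_none[OF assms(1)] NS_none[OF assms(2)] assms(3-5) unfolding Bq_def by simp
  qed
  show ?thesis using st at ao by (intro nstate.equality) auto
qed

lemma key_adoptB: "NS Q al s \<Longrightarrow> st s IB \<noteq> Adopted \<Longrightarrow> key (adopt t IB s) = key s"
proof -
  assume ns: "NS Q al s" "st s IB \<noteq> Adopted"
  show ?thesis
  proof (cases "st s IA = Adopted")
    case True
    then have "aord s = [IA]" using NS_A_only[OF ns(1)] ns(2) by simp
    then show ?thesis using ns(2) True unfolding key_def flag_def by simp
  next
    case False then show ?thesis unfolding key_def by simp
  qed
qed

definition tb :: "nat \<Rightarrow> nstate \<Rightarrow> bool" where
  "tb t s \<longleftrightarrow> (\<forall>X k. atime s X = Some k \<longrightarrow> k \<le> t)"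

lemma gshape:
  assumes ns: "NS Q a su"
  shows "filter (\<lambda>X. atime su X = Some t) (aord su) =
    (if atime su IA = Some t then (if atime su IB = Some t then (if aord su = [IB, IA] then [IB, IA] else [IA, IB]) else [IA])
     else (if atime su IB = Some t then [IB] else []))"
proof -
  have mem: "X \<in> set (aord su) \<longleftrightarrow> atime su X \<noteq> None" for X using ns unfolding NS_def by auto
  from NS_aord_cases[OF ns] show ?thesis
  proof (elim disjE exE)
    assume h: "aord su = []"
    then have "atime su IA = None" "atime su IB = None" using mem by auto
    then show ?thesis using h by simp
  next
    fix X assume h: "aord su = [X]"
    then have "atime su (other X) = None" using mem[of "other X"] by auto
    then show ?thesis using h by (cases X) auto
  next
    fix X assume h: "aord su = [X, other X]"
    then show ?thesis by (cases X) auto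
  qed
qed


locale mctx =
  fixes Q :: gaps and al :: "item \<Rightarrow> real"
  assumes okm: "\<forall>X. al X \<le> q_none Q X" and accB: "al IB \<le> q_cond Q IB"
begin

lemma infB: "NS Q al s \<Longrightarrow> inform Q al t IB s = (if st s IB \<noteq> Idle then s else adopt t IB s)"
  using inform_simp[of Q al s IB t] okm accB by simp

lemma infA: "NS Q al s \<Longrightarrow> inform Q al t IA s = (if st s IA \<noteq> Idle then s
           else if st s IB = Adopted \<and> \<not> al IA \<le> q_cond Q IA then set_status IA Rejected s
           else adopt t IA s)"
  using inform_simp[of Q al s IA t] okm by simp

lemma NSi: "NS Q al s \<Longrightarrow> NS Q al (inform Q al t X s)"
  using NS_inform okm by blast

lemma tbi: "tb t s \<Longrightarrow> tb t (inform Q al t X s)"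
  unfolding tb_def using inform_atime by (metis order_refl option.inject)

lemma Ma: "Mo s1 s2 \<Longrightarrow> NS Q al s1 \<Longrightarrow> NS Q al s2 \<Longrightarrow> Mo (inform Q al t IB s1) (inform Q al t IB s2)"
proof -
  assume m: "Mo s1 s2" and n: "NS Q al s1" "NS Q al s2"
  have b: "st s1 IB = st s2 IB" "atime s1 IB = atime s2 IB" using m unfolding Mo_def Bq_def by auto
  show ?thesis
  proof (cases "st s1 IB = Idle")
    case False then show ?thesis using m b infB[OF n(1)] infB[OF n(2)] by simp
  next
    case True
    have k1: "key (adopt t IB s1) = key s1" by (rule key_adoptB[OF n(1)]) (use True in simp)
    have k2: "key (adopt t IB s2) = key s2" by (rule key_adoptB[OF n(2)]) (use True b in simp)
    show ?thesis using m True b k1 k2 infB[OF n(1)] infB[OF n(2)] unfolding Mo_def Bq_def by simp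
  qed
qed

lemma Mc: "Mo s1 s2 \<Longrightarrow> NS Q al s1 \<Longrightarrow> Mo (inform Q al t IA s1) s2"
proof -
  assume m: "Mo s1 s2" and n: "NS Q al s1"
  show ?thesis
  proof (cases "st s1 IA = Idle")
    case False then show ?thesis using m infA[OF n] by simp
  next
    case True
    then have i2: "st s2 IA = Idle" using m unfolding Mo_def by simp
    then have "key s2 = None" unfolding key_def by simp
    then show ?thesis using m i2 infA[OF n] unfolding Mo_def Bq_def by auto
  qed
qed

lemma Md: "Mo s1 s2 \<Longrightarrow> NS Q al s1 \<Longrightarrow> NS Q al s2 \<Longrightarrow> tb t s1 \<Longrightarrow> st s1 IA \<noteq> Idle \<Longrightarrow> Mo s1 (inform Q al t IA s2)"
proof -
  assume m: "Mo s1 s2" and n: "NS Q al s1" "NS Q al s2" and tb: "tb t s1" and ni: "st s1 IA \<noteq> Idle"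
  have b: "st s1 IB = st s2 IB" "atime s1 IB = atime s2 IB" using m unfolding Mo_def Bq_def by auto
  show ?thesis
  proof (cases "st s2 IA = Idle")
    case False then show ?thesis using m infA[OF n(2)] by simp
  next
    case i2: True
    show ?thesis
    proof (cases "st s1 IA = Rejected")
      case True
      then have "st s1 IB = Adopted" "\<not> al IA \<le> q_cond Q IA" using n(1) unfolding NS_def by auto
      then have e: "inform Q al t IA s2 = set_status IA Rejected s2" using infA[OF n(2)] i2 b by simp
      show ?thesis using m True i2 unfolding e Mo_def Bq_def key_def by auto
    next
      case False
      have a1: "st s1 IA = Adopted" using ni n(1) False unfolding NS_def by (cases "st s1 IA") auto
      show ?thesis
      proof (cases "st s2 IB = Adopted \<and> \<not> al IA \<le> q_cond Q IA")
        case True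
        then have e: "inform Q al t IA s2 = set_status IA Rejected s2" using infA[OF n(2)] i2 by simp
        show ?thesis using m a1 i2 unfolding e Mo_def Bq_def key_def by auto
      next
        case False
        then have e: "inform Q al t IA s2 = adopt t IA s2" using infA[OF n(2), of t] i2 by auto
        obtain k where k: "atime s1 IA = Some k" using n(1) a1 unfolding NS_def by (cases "atime s1 IA") auto
        have kt: "k \<le> t" using tb k unfolding tb_def by simp
        have ao2: "aord (adopt t IA s2) = (if st s2 IB = Adopted then [IB, IA] else [IA])"
          using NS_B_only[OF n(2)] NS_none[OF n(2)] i2 by auto
        have f2: "flag (adopt t IA s2) = (if st s2 IB = Adopted \<and> atime s2 IB = Some t then 1 else 0)"
          unfolding flag_def using ao2 by auto
        have k1: "key s1 = Some (2 * k + flag s1)" unfolding key_def using a1 k by simp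
        have k2: "key (adopt t IA s2) = Some (2 * t + flag (adopt t IA s2))" unfolding key_def by simp
        have "2 * k + flag s1 \<le> 2 * t + flag (adopt t IA s2)"
        proof (cases "k < t")
          case True then show ?thesis unfolding flag_def by auto
        next
          case False
          then have "k = t" using kt by simp
          then show ?thesis using b k f2 by (simp add: flag_def[of s1])
        qed
        then show ?thesis using m a1 k1 k2 unfolding e Mo_def Bq_def by auto
      qed
    qed
  qed
qed

lemma Mb: "Mo s1 s2 \<Longrightarrow> NS Q al s1 \<Longrightarrow> NS Q al s2 \<Longrightarrow> tb t s1 \<Longrightarrow> Mo (inform Q al t IA s1) (inform Q al t IA s2)"
proof -
  assume m: "Mo s1 s2" and n: "NS Q al s1" "NS Q al s2" and tb: "tb t s1"
  show ?thesis
  proof (cases "st s1 IA = Idle")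
    case True
    then have "st s2 IA = Idle" using m unfolding Mo_def by simp
    then have "s1 = s2" using idle_eq[OF n] m True unfolding Mo_def by simp
    then show ?thesis by (simp add: Mo_refl)
  next
    case False
    then have "inform Q al t IA s1 = s1" using infA[OF n(1)] by simp
    then show ?thesis using Md[OF m n tb False] by simp
  qed
qed


lemma Msame: "Mo s1 s2 \<Longrightarrow> NS Q al s1 \<Longrightarrow> NS Q al s2 \<Longrightarrow> tb t s1 \<Longrightarrow>
  Mo (fold (inform Q al t) L s1) (fold (inform Q al t) L s2)"
proof (induction L arbitrary: s1 s2)
  case Nil then show ?case by simp
next
  case (Cons X L)
  have "Mo (inform Q al t X s1) (inform Q al t X s2)"
    using Cons.prems Ma Mb by (cases X) auto
  then show ?case unfolding fold_simps(2) using Cons.IH Cons.prems NSi tbi by blast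
qed

lemma Mcore:
  assumes m: "Mo s1 s2" and n: "NS Q al s1" "NS Q al s2" and tb: "tb t s1"
    and g1: "g1 = (if a1 then (if b then (if o1 then [IB, IA] else [IA, IB]) else [IA]) else (if b then [IB] else []))"
    and g2: "g2 = (if a2 then (if b then (if o2 then [IB, IA] else [IA, IB]) else [IA]) else (if b then [IB] else []))"
    and h1: "a2 \<Longrightarrow> \<not> a1 \<Longrightarrow> st s1 IA \<noteq> Idle"
    and h2: "a1 \<Longrightarrow> a2 \<Longrightarrow> b \<Longrightarrow> o1 \<Longrightarrow> o2"
  shows "Mo (fold (inform Q al t) g1 s1) (fold (inform Q al t) g2 s2)"
proof -
  let ?iA = "inform Q al t IA" and ?iB = "inform Q al t IB"
  have nA: "NS Q al (?iA s1)" "NS Q al (?iB s1)" "NS Q al (?iA s2)" "NS Q al (?iB s2)" using n NSi by auto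
  have tA: "tb t (?iA s1)" "tb t (?iB s1)" using tb tbi by auto
  show ?thesis
  proof (cases "a1 = a2 \<and> (a1 \<longrightarrow> b \<longrightarrow> o1 = o2)")
    case True
    then have "g1 = g2" using g1 g2 by auto
    then show ?thesis using Msame[OF m n tb] by simp
  next
    case False
    show ?thesis
    proof (cases a1)
      case a1: True
      show ?thesis
      proof (cases a2)
        case a2: True
        then have "b" "\<not> o1" "o2" using False a1 h2 by auto
        then have e: "g1 = [IA, IB]" "g2 = [IB, IA]" using g1 g2 a1 a2 by auto
        have "Mo (?iA s1) s2" by (rule Mc[OF m n(1)])
        then have "Mo (?iB (?iA s1)) (?iB s2)" using Ma[OF _ nA(1) n(2)] by blast
        then have "Mo (?iB (?iA s1)) (?iA (?iB s2))"
          using Md nA tA tbi inform_nonidle inform_nonidle_pres NSi by metis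
        then show ?thesis unfolding e by simp
      next
        case a2: False
        show ?thesis
        proof (cases b)
          case False
          then have e: "g1 = [IA]" "g2 = []" using g1 g2 a1 a2 by auto
          show ?thesis unfolding e using Mc[OF m n(1)] by simp
        next
          case b: True
          show ?thesis
          proof (cases o1)
            case True
            then have e: "g1 = [IB, IA]" "g2 = [IB]" using g1 g2 a1 a2 b by auto
            have "Mo (?iB s1) (?iB s2)" by (rule Ma[OF m n])
            then show ?thesis unfolding e using Mc nA by simp
          next
            case False
            then have e: "g1 = [IA, IB]" "g2 = [IB]" using g1 g2 a1 a2 b by auto
            have "Mo (?iA s1) s2" by (rule Mc[OF m n(1)])
            then show ?thesis unfolding e using Ma[OF _ nA(1) n(2)] by simp
          qed
        qed
      qed
    next
      case a1: False
      then have a2: "a2" using False by auto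
      have ni: "st s1 IA \<noteq> Idle" using h1 a1 a2 by simp
      show ?thesis
      proof (cases b)
        case False
        then have e: "g1 = []" "g2 = [IA]" using g1 g2 a1 a2 by auto
        show ?thesis unfolding e using Md[OF m n tb ni] by simp
      next
        case b: True
        show ?thesis
        proof (cases o2)
          case True
          then have e: "g1 = [IB]" "g2 = [IB, IA]" using g1 g2 a1 a2 b by auto
          have "Mo (?iB s1) (?iB s2)" by (rule Ma[OF m n])
          moreover have "st (?iB s1) IA \<noteq> Idle" using ni inform_nonidle_pres by blast
          ultimately show ?thesis unfolding e using Md nA tA by simp
        next
          case False
          have e: "g1 = [IB]" "g2 = [IA, IB]" using g1 g2 a1 a2 b False by auto
          have "Mo s1 (?iA s2)" by (rule Md[OF m n tb ni])
          then show ?thesis unfolding e using Ma n nA(3) by simp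
        qed
      qed
    qed
  qed
qed


lemma Mu:
  assumes m: "Mo s1 s2" and n: "NS Q al s1" "NS Q al s2" and tb: "tb t' s1"
    and mu: "Mo su1 su2" and nu: "NS Q a1 su1" "NS Q a2 su2"
    and ni1: "atime su1 IA \<noteq> None \<Longrightarrow> atime su1 IA \<noteq> Some t \<Longrightarrow> st s1 IA \<noteq> Idle"
  shows "Mo (fold (inform Q al t') (filter (\<lambda>X. atime su1 X = Some t) (aord su1)) s1)
            (fold (inform Q al t') (filter (\<lambda>X. atime su2 X = Some t) (aord su2)) s2)"
proof -
  have b: "atime su1 IB = atime su2 IB" using mu unfolding Mo_def Bq_def by simp
  have e2: "filter (\<lambda>X. atime su2 X = Some t) (aord su2) =
    (if atime su2 IA = Some t then (if atime su1 IB = Some t then (if aord su2 = [IB, IA] then [IB, IA] else [IA, IB]) else [IA])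
     else (if atime su1 IB = Some t then [IB] else []))" using gshape[OF nu(2)] b by simp
  have h1: "st s1 IA \<noteq> Idle" if "atime su2 IA = Some t" "atime su1 IA \<noteq> Some t"
  proof -
    have "st su2 IA = Adopted" using NS_adopted_iff[OF nu(2), of IA] that(1) by auto
    then have "key su2 \<noteq> None" unfolding key_def by simp
    then have "key su1 \<noteq> None" using mu unfolding Mo_def by (cases "key su1"; cases "key su2") auto
    then have "st su1 IA = Adopted" unfolding key_def by (auto split: if_splits)
    then have "atime su1 IA \<noteq> None" using NS_adopted_iff[OF nu(1), of IA] by auto
    then show ?thesis using ni1 that(2) by simp
  qed
  have h2: "aord su2 = [IB, IA]" if "atime su1 IA = Some t" "atime su2 IA = Some t" "atime su1 IB = Some t" "aord su1 = [IB, IA]"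
  proof -
    have a: "st su1 IA = Adopted" "st su2 IA = Adopted" "st su1 IB = Adopted" "st su2 IB = Adopted"
      using NS_adopted_iff[OF nu(1)] NS_adopted_iff[OF nu(2)] that b by auto
    have "key su1 = Some (2 * t + 1)" using a that unfolding key_def flag_def by simp
    moreover have "key su2 = Some (2 * t + flag su2)" using a that b unfolding key_def by simp
    ultimately have "flag su2 \<ge> 1" using mu unfolding Mo_def by simp
    then show ?thesis unfolding flag_def by (auto split: if_splits)
  qed
  show ?thesis
    by (rule Mcore[OF m n tb gshape[OF nu(1)] e2]) (use h1 h2 in auto)
qed

lemma M_us:
  assumes "Mo s1 s2" "NS Q al s1" "NS Q al s2" "tb t' s1"
    and "\<forall>u\<in>set us. Mo (R1 u) (R2 u) \<and> NS Q (a1 u) (R1 u) \<and> NS Q (a2 u) (R2 u)"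
    and "\<forall>u\<in>set us. lv u \<longrightarrow> atime (R1 u) IA \<noteq> None \<longrightarrow> atime (R1 u) IA \<noteq> Some t \<longrightarrow> st s1 IA \<noteq> Idle"
  shows "Mo (fold (\<lambda>u. fold (inform Q al t') (if lv u then filter (\<lambda>X. atime (R1 u) X = Some t) (aord (R1 u)) else [])) us s1)
            (fold (\<lambda>u. fold (inform Q al t') (if lv u then filter (\<lambda>X. atime (R2 u) X = Some t) (aord (R2 u)) else [])) us s2)"
  using assms
proof (induction us arbitrary: s1 s2)
  case Nil then show ?case by simp
next
  case (Cons u us)
  let ?s1 = "fold (inform Q al t') (if lv u then filter (\<lambda>X. atime (R1 u) X = Some t) (aord (R1 u)) else []) s1"
  let ?s2 = "fold (inform Q al t') (if lv u then filter (\<lambda>X. atime (R2 u) X = Some t) (aord (R2 u)) else []) s2"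
  have r1: "Mo ?s1 ?s2"
  proof (cases "lv u")
    case True
    show ?thesis using True Mu[OF Cons.prems(1-4), of "R1 u" "R2 u" "a1 u" "a2 u" t] Cons.prems(5,6) by simp
  next
    case False then show ?thesis using Cons.prems(1) by simp
  qed
  have nf: "NS Q al (fold (inform Q al t') L s)" if "NS Q al s" for L s
    using that by (induction L arbitrary: s) (simp_all add: NSi)
  have tf: "tb t' (fold (inform Q al t') L s)" if "tb t' s" for L s
    using that by (induction L arbitrary: s) (simp_all add: tbi)
  have n1: "NS Q al ?s1" "NS Q al ?s2" "tb t' ?s1" using Cons.prems(2-4) nf tf by auto
  have i1: "\<forall>u\<in>set us. lv u \<longrightarrow> atime (R1 u) IA \<noteq> None \<longrightarrow> atime (R1 u) IA \<noteq> Some t \<longrightarrow> st ?s1 IA \<noteq> Idle"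
    using Cons.prems(6) fold_nonidle_pres by (metis list.set_intros(2))
  show ?case unfolding fold_simps(2) using Cons.IH[OF r1 n1 _ i1] Cons.prems(5) by simp
qed

lemma stA_keep: "NS Q al s \<Longrightarrow> st s IA \<noteq> Idle \<Longrightarrow> st (inform Q al t X s) IA = st s IA"
  by (cases X) (simp_all add: infA infB)

lemma stA_B: "NS Q al s \<Longrightarrow> st (inform Q al t IB s) IA = st s IA"
  by (simp add: infB)

lemma key_keep: "NS Q al s \<Longrightarrow> st s IA = Adopted \<Longrightarrow> key (inform Q al t X s) = key s"
proof (cases X)
  case IA
  assume "NS Q al s" "st s IA = Adopted" then show ?thesis using IA by (simp add: infA)
next
  case IB
  assume n: "NS Q al s" "st s IA = Adopted"
  show ?thesis
  proof (cases "st s IB = Idle")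
    case True then show ?thesis using IB key_adoptB[OF n(1)] by (simp add: infB[OF n(1)])
  next
    case False then show ?thesis using IB by (simp add: infB[OF n(1)])
  qed
qed

lemma fold_keep: "NS Q al s \<Longrightarrow> st s IA \<noteq> Idle \<Longrightarrow>
   st (fold (inform Q al t) L s) IA = st s IA \<and> (st s IA = Adopted \<longrightarrow> key (fold (inform Q al t) L s) = key s)"
proof (induction L arbitrary: s)
  case Nil then show ?case by simp
next
  case (Cons X L)
  have "NS Q al (inform Q al t X s)" using Cons.prems NSi by blast
  moreover have "st (inform Q al t X s) IA = st s IA" using stA_keep Cons.prems by blast
  moreover have "st s IA = Adopted \<longrightarrow> key (inform Q al t X s) = key s" using key_keep Cons.prems by blast
  ultimately show ?case using Cons.IH[of "inform Q al t X s"] Cons.prems(2) by auto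
qed

lemma fold_B: "NS Q al s \<Longrightarrow> set L \<subseteq> {IB} \<Longrightarrow> st (fold (inform Q al t) L s) IA = st s IA"
proof (induction L arbitrary: s)
  case Nil then show ?case by simp
next
  case (Cons X L)
  then have "X = IB" by simp
  then show ?case using Cons NSi stA_B by simp
qed

end



lemma Mo_seed: "S2 \<subseteq> S1 \<Longrightarrow> Mo (seed_state S1 SB tau v) (seed_state S2 SB tau v)"
proof -
  assume sub: "S2 \<subseteq> S1"
  show ?thesis
  proof (cases "v \<in> S2")
    case True then have "v \<in> S1" using sub by auto
    then show ?thesis using True unfolding seed_state_def by (simp add: Mo_refl)
  next
    case False
    show ?thesis
    proof (cases "v \<in> S1")
      case False then show ?thesis using \<open>v \<notin> S2\<close> unfolding seed_state_def by (simp add: Mo_refl)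
    next
      case True
      then show ?thesis using \<open>v \<notin> S2\<close> unfolding seed_state_def Mo_def Bq_def key_def init_node_def
        by (cases "tau v") auto
    qed
  qed
qed

lemma M_run:
  assumes okm: "\<forall>X v. alpha (X, v) \<le> q_none Q X" and accB: "\<forall>v. alpha (IB, v) \<le> q_cond Q IB"
    and sub: "S2 \<subseteq> S1"
  shows "Mo (run Q S1 SB ((live, prm, tau), alpha) t v) (run Q S2 SB ((live, prm, tau), alpha) t v)"
proof (induction t arbitrary: v)
  case 0 show ?case using Mo_seed[OF sub] by simp
next
  case (Suc t)
  let ?R = "run Q S1 SB ((live, prm, tau), alpha) t" and ?M = "run Q S2 SB ((live, prm, tau), alpha) t"
  have wr: "WF Q live prm alpha ?R t" by (rule WF_run[OF okm])
  have wm: "WF Q live prm alpha ?M t" by (rule WF_run[OF okm])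
  interpret mctx Q "\<lambda>X. alpha (X, v)"
    by unfold_locales (use okm accB in auto)
  have gle: "gl live S t u v = (if live (u, v) then filter (\<lambda>X. atime (S u) X = Some t) (aord (S u)) else [])" for S u
    unfolding gl_def by simp
  have ni: "\<forall>u\<in>set (prm v). live (u, v) \<longrightarrow> atime (?R u) IA \<noteq> None \<longrightarrow> atime (?R u) IA \<noteq> Some t \<longrightarrow> st (?R v) IA \<noteq> Idle"
  proof (intro ballI impI)
    fix u assume h: "u \<in> set (prm v)" "live (u, v)" "atime (?R u) IA \<noteq> None" "atime (?R u) IA \<noteq> Some t"
    then obtain k where k: "atime (?R u) IA = Some k" by auto
    then have "k \<le> t" using wr unfolding WF_def NSt_def by blast
    then have "k < t" using k h(4) by (cases "k = t") auto
    then show "st (?R v) IA \<noteq> Idle" using wr h k unfolding WF_def by blast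
  qed
  have nsr: "\<And>v. NS Q (\<lambda>X. alpha (X, v)) (?R v)" using wr unfolding WF_def NSt_def by blast
  have nsm: "\<And>v. NS Q (\<lambda>X. alpha (X, v)) (?M v)" using wm unfolding WF_def NSt_def by blast
  have tbr: "tb (Suc t) (?R v)" using wr unfolding WF_def NSt_def tb_def by (meson le_SucI)
  show ?case unfolding run_Suc' gle
    by (rule M_us[OF Suc.IH nsr nsm tbr _ ni, of _ "\<lambda>u X. alpha (X, u)" "\<lambda>u X. alpha (X, u)"]) (use Suc.IH nsr nsm in auto)
qed


definition J :: "nstate \<Rightarrow> nstate \<Rightarrow> nstate \<Rightarrow> bool" where
  "J s1 s2 s3 \<longleftrightarrow> st s1 IA \<noteq> Adopted \<or> key s1 = key s2 \<or> key s1 = key s3"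

lemma flag_le: "flag s \<le> 1" unfolding flag_def by simp

lemma arith2: "2 * (a::nat) + b = 2 * c + d \<Longrightarrow> b \<le> 1 \<Longrightarrow> d \<le> 1 \<Longrightarrow> a = c \<and> b = d"
  by presburger

lemma g_eq_key:
  assumes n: "NS Q a1 su1" "NS Q a2 su2" and b: "Bq su1 su2" and ad: "st su1 IA = Adopted"
    and k: "key su1 = key su2"
  shows "filter (\<lambda>X. atime su1 X = Some t) (aord su1) = filter (\<lambda>X. atime su2 X = Some t) (aord su2)"
proof -
  have ad2: "st su2 IA = Adopted" using k ad unfolding key_def by (auto split: if_splits)
  obtain k1 where k1: "atime su1 IA = Some k1" using NS_adopted_iff[OF n(1), of IA] ad by auto
  obtain k2 where k2: "atime su2 IA = Some k2" using NS_adopted_iff[OF n(2), of IA] ad2 by auto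
  have "2 * k1 + flag su1 = 2 * k2 + flag su2" using k ad ad2 k1 k2 unfolding key_def by simp
  then have kk: "k1 = k2" "flag su1 = flag su2" using arith2[OF _ flag_le[of su1] flag_le[of su2]] by blast+
  have bb: "st su1 IB = st su2 IB" "atime su1 IB = atime su2 IB" using b unfolding Bq_def by auto
  have o: "aord su1 = [IB, IA] \<longleftrightarrow> aord su2 = [IB, IA]" if "atime su1 IB = Some t" "k1 = t"
  proof -
    have "st su1 IB = Adopted" using NS_adopted_iff[OF n(1), of IB] that by auto
    then have f1: "flag su1 = (if aord su1 = [IB, IA] then 1 else 0)"
      using that k1 by (simp add: flag_def)
    have f2: "flag su2 = (if aord su2 = [IB, IA] then 1 else 0)"
      using that k2 kk(1) bb \<open>st su1 IB = Adopted\<close> by (simp add: flag_def)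
    show ?thesis using kk(2) f1 f2 by (cases "aord su1 = [IB, IA]"; cases "aord su2 = [IB, IA]") simp_all
  qed
  show ?thesis
  proof (cases "k1 = t \<and> atime su1 IB = Some t")
    case True
    then show ?thesis unfolding gshape[OF n(1)] gshape[OF n(2)] using k1 k2 kk(1) bb o by simp
  next
    case False
    then show ?thesis unfolding gshape[OF n(1)] gshape[OF n(2)] using k1 k2 kk(1) bb by auto
  qed
qed

context mctx begin

lemma Ju:
  assumes m: "Mo s1 s2" "Mo s1 s3" and n: "NS Q al s1" "NS Q al s2" "NS Q al s3" and j: "J s1 s2 s3"
    and mu: "Mo su1 su2" "Mo su1 su3" and ju: "J su1 su2 su3"
    and nu: "NS Q a1 su1" "NS Q a2 su2" "NS Q a3 su3"
  shows "J (fold (inform Q al t') (filter (\<lambda>X. atime su1 X = Some t) (aord su1)) s1)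
           (fold (inform Q al t') (filter (\<lambda>X. atime su2 X = Some t) (aord su2)) s2)
           (fold (inform Q al t') (filter (\<lambda>X. atime su3 X = Some t) (aord su3)) s3)"
  (is "J (fold ?f ?g1 s1) (fold ?f ?g2 s2) (fold ?f ?g3 s3)")
proof (cases "st s1 IA = Idle")
  case False
  have k1: "st (fold ?f ?g1 s1) IA = st s1 IA" "st s1 IA = Adopted \<longrightarrow> key (fold ?f ?g1 s1) = key s1"
    using fold_keep[OF n(1) False] by auto
  show ?thesis
  proof (cases "st s1 IA = Adopted")
    case False then show ?thesis using k1 unfolding J_def by simp
  next
    case True
    then have "key s1 = key s2 \<or> key s1 = key s3" using j unfolding J_def by simp
    then show ?thesis
    proof
      assume e: "key s1 = key s2"
      then have "st s2 IA = Adopted" using True unfolding key_def by (auto split: if_splits)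
      then have "key (fold ?f ?g2 s2) = key s2" using fold_keep[OF n(2)] by simp
      then show ?thesis using k1 e True unfolding J_def by simp
    next
      assume e: "key s1 = key s3"
      then have "st s3 IA = Adopted" using True unfolding key_def by (auto split: if_splits)
      then have "key (fold ?f ?g3 s3) = key s3" using fold_keep[OF n(3)] by simp
      then show ?thesis using k1 e True unfolding J_def by simp
    qed
  qed
next
  case i1: True
  have i2: "st s2 IA = Idle" "st s3 IA = Idle" using m i1 unfolding Mo_def by auto
  have e2: "s1 = s2" using idle_eq[OF n(1) n(2)] m(1) i1 i2 unfolding Mo_def by simp
  have e3: "s1 = s3" using idle_eq[OF n(1) n(3)] m(2) i1 i2 unfolding Mo_def by simp
  show ?thesis
  proof (cases "atime su1 IA = Some t")
    case False
    then have "set ?g1 \<subseteq> {IB}" unfolding gshape[OF nu(1)] by auto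
    then have "st (fold ?f ?g1 s1) IA = Idle" using fold_B[OF n(1)] i1 by simp
    then show ?thesis unfolding J_def by simp
  next
    case True
    then have ad: "st su1 IA = Adopted" using NS_adopted_iff[OF nu(1), of IA] by auto
    then have "key su1 = key su2 \<or> key su1 = key su3" using ju unfolding J_def by simp
    then show ?thesis
    proof
      assume "key su1 = key su2"
      then have "?g1 = ?g2" using g_eq_key[OF nu(1) nu(2) _ ad] mu(1) unfolding Mo_def by simp
      then show ?thesis using e2 unfolding J_def by simp
    next
      assume "key su1 = key su3"
      then have "?g1 = ?g3" using g_eq_key[OF nu(1) nu(3) _ ad] mu(2) unfolding Mo_def by simp
      then show ?thesis using e3 unfolding J_def by simp
    qed
  qed
qed


lemma J_us:
  assumes "Mo s1 s2" "Mo s1 s3" "NS Q al s1" "NS Q al s2" "NS Q al s3" "tb t' s1" "J s1 s2 s3"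
    and "\<forall>u\<in>set us. Mo (R1 u) (R2 u) \<and> Mo (R1 u) (R3 u) \<and> J (R1 u) (R2 u) (R3 u) \<and>
           NS Q (a u) (R1 u) \<and> NS Q (a u) (R2 u) \<and> NS Q (a u) (R3 u)"
    and "\<forall>u\<in>set us. lv u \<longrightarrow> atime (R1 u) IA \<noteq> None \<longrightarrow> atime (R1 u) IA \<noteq> Some t \<longrightarrow> st s1 IA \<noteq> Idle"
  shows "J (fold (\<lambda>u. fold (inform Q al t') (if lv u then filter (\<lambda>X. atime (R1 u) X = Some t) (aord (R1 u)) else [])) us s1)
           (fold (\<lambda>u. fold (inform Q al t') (if lv u then filter (\<lambda>X. atime (R2 u) X = Some t) (aord (R2 u)) else [])) us s2)
           (fold (\<lambda>u. fold (inform Q al t') (if lv u then filter (\<lambda>X. atime (R3 u) X = Some t) (aord (R3 u)) else [])) us s3)"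
  using assms
proof (induction us arbitrary: s1 s2 s3)
  case Nil then show ?case by simp
next
  case (Cons u us)
  let ?g = "\<lambda>R. if lv u then filter (\<lambda>X. atime (R u) X = Some t) (aord (R u)) else []"
  let ?s1 = "fold (inform Q al t') (?g R1) s1"
  let ?s2 = "fold (inform Q al t') (?g R2) s2"
  let ?s3 = "fold (inform Q al t') (?g R3) s3"
  have hu: "Mo (R1 u) (R2 u)" "Mo (R1 u) (R3 u)" "J (R1 u) (R2 u) (R3 u)"
    "NS Q (a u) (R1 u)" "NS Q (a u) (R2 u)" "NS Q (a u) (R3 u)" using Cons.prems(8) by auto
  have ni: "atime (R1 u) IA \<noteq> None \<Longrightarrow> atime (R1 u) IA \<noteq> Some t \<Longrightarrow> st s1 IA \<noteq> Idle" if "lv u"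
    using Cons.prems(9) that by simp
  have r: "Mo ?s1 ?s2 \<and> Mo ?s1 ?s3 \<and> J ?s1 ?s2 ?s3"
  proof (cases "lv u")
    case True
    have "Mo ?s1 ?s2" using True Mu[OF Cons.prems(1,3,4,6) hu(1,4,5), of t] ni by simp
    moreover have "Mo ?s1 ?s3" using True Mu[OF Cons.prems(2,3,5,6) hu(2,4,6), of t] ni by simp
    moreover have "J ?s1 ?s2 ?s3" using True Ju[OF Cons.prems(1-5,7) hu(1-6), of t' t] by simp
    ultimately show ?thesis by simp
  next
    case False then show ?thesis using Cons.prems(1,2,7) by simp
  qed
  have nf: "NS Q al (fold (inform Q al t') L s)" if "NS Q al s" for L s
    using that by (induction L arbitrary: s) (simp_all add: NSi)
  have tf: "tb t' (fold (inform Q al t') L s)" if "tb t' s" for L s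
    using that by (induction L arbitrary: s) (simp_all add: tbi)
  have n1: "NS Q al ?s1" "NS Q al ?s2" "NS Q al ?s3" "tb t' ?s1" using Cons.prems(3-6) nf tf by auto
  have i1: "\<forall>u\<in>set us. lv u \<longrightarrow> atime (R1 u) IA \<noteq> None \<longrightarrow> atime (R1 u) IA \<noteq> Some t \<longrightarrow> st ?s1 IA \<noteq> Idle"
    using Cons.prems(9) fold_nonidle_pres by (metis list.set_intros(2))
  show ?case unfolding fold_simps(2)
    using Cons.IH[of ?s1 ?s2 ?s3] r n1 i1 Cons.prems(8) by simp
qed

end

lemma J_seed: "J (seed_state (S \<union> T) SB tau v) (seed_state S SB tau v) (seed_state T SB tau v)"
  unfolding J_def seed_state_def by (auto simp: init_node_def)

lemma J_run:
  assumes okm: "\<forall>X v. alpha (X, v) \<le> q_none Q X" and accB: "\<forall>v. alpha (IB, v) \<le> q_cond Q IB"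
  shows "J (run Q (S \<union> T) SB ((live, prm, tau), alpha) t v) (run Q S SB ((live, prm, tau), alpha) t v)
           (run Q T SB ((live, prm, tau), alpha) t v)"
proof (induction t arbitrary: v)
  case 0 show ?case using J_seed by simp
next
  case (Suc t)
  let ?R = "run Q (S \<union> T) SB ((live, prm, tau), alpha) t" and ?M = "run Q S SB ((live, prm, tau), alpha) t"
    and ?N = "run Q T SB ((live, prm, tau), alpha) t"
  have wr: "WF Q live prm alpha ?R t" by (rule WF_run[OF okm])
  have wm: "WF Q live prm alpha ?M t" by (rule WF_run[OF okm])
  have wn: "WF Q live prm alpha ?N t" by (rule WF_run[OF okm])
  have m2: "\<And>v. Mo (?R v) (?M v)" by (rule M_run[OF okm accB]) simp
  have m3: "\<And>v. Mo (?R v) (?N v)" by (rule M_run[OF okm accB]) simp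
  interpret mctx Q "\<lambda>X. alpha (X, v)"
    by unfold_locales (use okm accB in auto)
  have gle: "gl live S t u v = (if live (u, v) then filter (\<lambda>X. atime (S u) X = Some t) (aord (S u)) else [])" for S u
    unfolding gl_def by simp
  have ni: "\<forall>u\<in>set (prm v). live (u, v) \<longrightarrow> atime (?R u) IA \<noteq> None \<longrightarrow> atime (?R u) IA \<noteq> Some t \<longrightarrow> st (?R v) IA \<noteq> Idle"
  proof (intro ballI impI)
    fix u assume h: "u \<in> set (prm v)" "live (u, v)" "atime (?R u) IA \<noteq> None" "atime (?R u) IA \<noteq> Some t"
    then obtain k where k: "atime (?R u) IA = Some k" by auto
    then have "k \<le> t" using wr unfolding WF_def NSt_def by blast
    then have "k < t" using k h(4) by (cases "k = t") auto
    then show "st (?R v) IA \<noteq> Idle" using wr h k unfolding WF_def by blast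
  qed
  have nsr: "\<And>v. NS Q (\<lambda>X. alpha (X, v)) (?R v)" using wr unfolding WF_def NSt_def by blast
  have nsm: "\<And>v. NS Q (\<lambda>X. alpha (X, v)) (?M v)" using wm unfolding WF_def NSt_def by blast
  have nsn: "\<And>v. NS Q (\<lambda>X. alpha (X, v)) (?N v)" using wn unfolding WF_def NSt_def by blast
  have tbr: "tb (Suc t) (?R v)" using wr unfolding WF_def NSt_def tb_def by (meson le_SucI)
  show ?case unfolding run_Suc' gle
    by (rule J_us[OF m2 m3 nsr nsm nsn tbr Suc.IH _ ni, where a = "\<lambda>u X. alpha (X, u)"]) (use Suc.IH nsr nsm nsn m2 m3 in auto)
qed



instance item :: finite
proof
  have "(UNIV :: item set) \<subseteq> {IA, IB}" using item_cases2 by auto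
  then show "finite (UNIV :: item set)" using finite_subset by blast
qed

lemma inform_cong:
  assumes "\<forall>X. (al X \<le> q_none Q X) = (al' X \<le> q_none Q X) \<and> (al X \<le> q_cond Q X) = (al' X \<le> q_cond Q X)"
  shows "inform Q al t X s = inform Q al' t X s"
  using assms unfolding inform_def adopt_recons_def Let_def by simp

lemma run_alpha_cong:
  assumes "\<forall>X v. (alpha (X, v) \<le> q_none Q X) = (alpha' (X, v) \<le> q_none Q X) \<and> (alpha (X, v) \<le> q_cond Q X) = (alpha' (X, v) \<le> q_cond Q X)"
  shows "run Q SA SB ((l, pr, tau), alpha) t = run Q SA SB ((l, pr, tau), alpha') t"
proof (induction t)
  case 0 show ?case by simp
next
  case (Suc t)
  have e: "inform Q (\<lambda>X. alpha (X, v)) (Suc t) = inform Q (\<lambda>X. alpha' (X, v)) (Suc t)" for v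
    using inform_cong[of "\<lambda>X. alpha (X, v)" Q "\<lambda>X. alpha' (X, v)"] assms by (auto intro!: ext)
  show ?case
  proof
    fix v show "run Q SA SB ((l, pr, tau), alpha) (Suc t) v = run Q SA SB ((l, pr, tau), alpha') (Suc t) v"
      unfolding run_Suc' Suc.IH e ..
  qed
qed

definition beta :: "gaps \<Rightarrow> (item \<times> 'v \<Rightarrow> real) \<Rightarrow> (item \<times> 'v \<Rightarrow> bool \<times> bool)" where
  "beta Q a = (\<lambda>i. (a i \<le> q_none Q (fst i), a i \<le> q_cond Q (fst i)))"

definition gfun :: "gaps \<Rightarrow> 'v set \<Rightarrow> 'v set \<Rightarrow> 'v world \<Rightarrow> real" where
  "gfun Q SA SB w = real (card {v. st (final_state Q SA SB w v) IA = Adopted})"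

lemma gfun_beta:
  assumes "beta Q a = beta Q a'"
  shows "gfun Q SA SB (d, a) = gfun Q SA SB (d, a')"
proof -
  obtain l pr tau where d: "d = (l, pr, tau)" by (metis prod.exhaust)
  have "\<forall>X v. (a (X, v) \<le> q_none Q X) = (a' (X, v) \<le> q_none Q X) \<and> (a (X, v) \<le> q_cond Q X) = (a' (X, v) \<le> q_cond Q X)"
  proof (intro allI)
    fix X v
    have "beta Q a (X, v) = beta Q a' (X, v)" using assms by simp
    then show "(a (X, v) \<le> q_none Q X) = (a' (X, v) \<le> q_none Q X) \<and> (a (X, v) \<le> q_cond Q X) = (a' (X, v) \<le> q_cond Q X)"
      unfolding beta_def by simp
  qed
  then have "run Q SA SB (d, a) t = run Q SA SB (d, a') t" for t unfolding d by (rule run_alpha_cong)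
  then have "final_state Q SA SB (d, a) = final_state Q SA SB (d, a')" unfolding final_state_def
    by (simp del: run.simps)
  then show ?thesis unfolding gfun_def by simp
qed

abbreviation PU :: "(item \<times> 'v \<Rightarrow> real) measure" where
  "PU \<equiv> (\<Pi>\<^sub>M i\<in>(UNIV :: (item \<times> 'v) set). uniform_measure lborel {0..1})"
lemma sp: "space PU = UNIV" by (simp add: space_PiM)
lemma e: "{a. beta Q a = b} = (\<Inter>i\<in>UNIV. {a :: item \<times> 'v \<Rightarrow> real. (a i \<le> q_none Q (fst i)) = fst (b i) \<and> (a i \<le> q_cond Q (fst i)) = snd (b i)})"
proof (rule set_eqI)
  fix a :: "item \<times> 'v \<Rightarrow> real"
  show "a \<in> {a. beta Q a = b} \<longleftrightarrow> a \<in> (\<Inter>i\<in>UNIV. {a. (a i \<le> q_none Q (fst i)) = fst (b i) \<and> (a i \<le> q_cond Q (fst i)) = snd (b i)})"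
    unfolding beta_def by (simp add: fun_eq_iff prod_eq_iff)
qed
lemma c: "{a :: item \<times> 'v \<Rightarrow> real. (a i \<le> c) = B1 \<and> (a i \<le> d) = B2} \<in> sets PU"
proof -
  have "{a :: item \<times> 'v \<Rightarrow> real. (a i \<le> c) = B1 \<and> (a i \<le> d) = B2} = {a \<in> space PU. (a i \<le> c) = B1 \<and> (a i \<le> d) = B2}"
    by (auto simp: space_PiM)
  also have "\<dots> \<in> sets PU" by measurable
  finally show ?thesis .
qed

lemma s1: "{a. beta Q a = b} \<in> sets (PU :: (item \<times> 'v::finite \<Rightarrow> real) measure)"
  unfolding e by (rule sets.finite_INT) (auto intro: c)

lemma beta_meas: "beta Q \<in> measurable (PU :: (item \<times> 'v::finite \<Rightarrow> real) measure) (count_space UNIV)"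
proof (subst measurable_count_space_eq2_countable, intro conjI ballI)
  show "beta Q \<in> space PU \<rightarrow> UNIV" by simp
  fix b :: "item \<times> 'v \<Rightarrow> bool \<times> bool"
  have "beta Q -` {b} \<inter> space PU = {a. beta Q a = b}" by (auto simp: space_PiM)
  then show "beta Q -` {b} \<inter> space (PU :: (item \<times> 'v::finite \<Rightarrow> real) measure) \<in> sets PU" using s1 by simp
qed

lemma gfun_meas: "gfun Q SA SB \<in> borel_measurable (world_measure (E :: ('v::finite \<times> 'v) set) p)"
proof -
  have se: "sets (world_measure E p) = sets (count_space UNIV \<Otimes>\<^sub>M (PU :: (item \<times> 'v \<Rightarrow> real) measure))"
    unfolding world_measure_def by (rule sets_pair_measure_cong) simp_all
  have "gfun Q SA SB \<in> borel_measurable (count_space UNIV \<Otimes>\<^sub>M (PU :: (item \<times> 'v \<Rightarrow> real) measure))"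
  proof (rule measurable_pair_measure_countable1)
    show "countable (UNIV :: 'v dworld set)" by simp
    fix d :: "'v dworld"
    define rep where "rep b = (SOME a. beta Q a = b)" for b :: "item \<times> 'v \<Rightarrow> bool \<times> bool"
    have r: "beta Q (rep (beta Q a)) = beta Q a" for a unfolding rep_def by (rule someI[where x = a]) (rule refl)
    have e: "(\<lambda>a. gfun Q SA SB (d, a)) = (\<lambda>b. gfun Q SA SB (d, rep b)) \<circ> beta Q"
      using gfun_beta[OF r[symmetric]] by (auto simp: fun_eq_iff)
    show "(\<lambda>a. gfun Q SA SB (d, a)) \<in> borel_measurable PU"
      unfolding e by (rule measurable_comp[OF beta_meas]) simp
  qed
  then show ?thesis unfolding measurable_cong_sets[OF se refl] .
qed

lemma prob_W: "prob_space (world_measure (E :: ('v::finite \<times> 'v) set) p)"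
  unfolding world_measure_def by (intro prob_space_pair prob_space_measure_pmf) (rule prob_space_PiM, rule prob_space_uniform_measure, auto)

lemma gfun_int: "integrable (world_measure (E :: ('v::finite \<times> 'v) set) p) (gfun Q SA SB)"
proof -
  interpret prob_space "world_measure E p" by (rule prob_W)
  have "card {v. st (final_state Q SA SB w v) IA = Adopted} \<le> CARD('v)" for w by (rule card_mono) auto
  then have "norm (gfun Q SA SB w) \<le> real CARD('v)" for w unfolding gfun_def by simp
  then show ?thesis by (intro integrable_const_bound[where B = "real CARD('v)"] gfun_meas) auto
qed

lemma AE_unit: "AE w in world_measure (E :: ('v::finite \<times> 'v) set) p. \<forall>i. snd w i \<in> {0..1}"
proof -
  have pu: "prob_space (PU :: (item \<times> 'v \<Rightarrow> real) measure)" by (rule prob_space_PiM, rule prob_space_uniform_measure, auto)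
  have "AE a in (PU :: (item \<times> 'v \<Rightarrow> real) measure). \<forall>i\<in>UNIV. a i \<in> {0..1}"
  proof (rule AE_finite_allI)
    fix i :: "item \<times> 'v"
    have "AE x in uniform_measure lborel {0..1::real}. x \<in> {0..1}"
      by (rule AE_uniform_measureI) auto
    then have "AE x in distr PU (uniform_measure lborel {0..1::real}) (\<lambda>a. a i). x \<in> {0..1}"
      by (subst distr_PiM_component) (auto intro: prob_space_uniform_measure)
    then show "AE a in PU. a i \<in> {0..1}" by (rule AE_distrD[rotated]) measurable
  qed simp
  then obtain N where N: "{a \<in> space PU. \<not> (\<forall>i\<in>UNIV. a i \<in> {0..1})} \<subseteq> N" "emeasure PU N = 0" "N \<in> sets (PU :: (item \<times> 'v \<Rightarrow> real) measure)"
    by (rule AE_E)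
  interpret sigma_finite_measure "PU :: (item \<times> 'v \<Rightarrow> real) measure"
    using pu by (simp add: prob_space_imp_sigma_finite)
  have "UNIV \<times> N \<in> null_sets (measure_pmf (dworld_pmf E p) \<Otimes>\<^sub>M PU)"
    by (rule times_in_null_sets2) (use N in auto)
  moreover have "{w \<in> space (measure_pmf (dworld_pmf E p) \<Otimes>\<^sub>M (PU :: (item \<times> 'v \<Rightarrow> real) measure)). \<not> (\<forall>i. snd w i \<in> {0..1})} \<subseteq> UNIV \<times> N"
  proof
    fix w assume "w \<in> {w \<in> space (measure_pmf (dworld_pmf E p) \<Otimes>\<^sub>M (PU :: (item \<times> 'v \<Rightarrow> real) measure)). \<not> (\<forall>i. snd w i \<in> {0..1})}"
    then have "snd w \<in> {a \<in> space (PU :: (item \<times> 'v \<Rightarrow> real) measure). \<not> (\<forall>i\<in>UNIV. a i \<in> {0..1})}" by (simp add: space_PiM)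
    then have "snd w \<in> N" using N(1) by blast
    then show "w \<in> UNIV \<times> N" by (cases w) simp
  qed
  ultimately show ?thesis unfolding world_measure_def by (rule AE_I')
qed

lemma qn1: "q_none (1, qAB, 1, qBA) X = 1" by (cases X) auto

lemma world_union:
  fixes live :: "'v::finite \<times> 'v \<Rightarrow> bool" and alpha :: "item \<times> 'v \<Rightarrow> real"
  assumes a01: "\<forall>i. alpha i \<in> {0..1}" and qb: "0 \<le> qBA"
  shows "{v. st (final_state (1, qAB, 1, qBA) (S \<union> T) SB ((live, prm, tau), alpha) v) IA = Adopted} =
         {v. st (final_state (1, qAB, 1, qBA) S SB ((live, prm, tau), alpha) v) IA = Adopted} \<union>
         {v. st (final_state (1, qAB, 1, qBA) T SB ((live, prm, tau), alpha) v) IA = Adopted}"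
proof -
  let ?Q = "(1, qAB, 1, qBA) :: gaps"
  let ?N = "2 * CARD('v)"
  define alpham :: "item \<times> 'v \<Rightarrow> real" where "alpham = (\<lambda>(X, v). if X = IB then 0 else alpha (X, v))"
  have okr: "\<forall>X v. alpha (X, v) \<le> q_none ?Q X" using a01 by (simp add: qn1)
  have okm: "\<forall>X v. alpham (X, v) \<le> q_none ?Q X" using a01 by (simp add: qn1 alpham_def)
  have eqA: "\<forall>v. alpham (IA, v) = alpha (IA, v)" by (simp add: alpham_def)
  have accB: "\<forall>v. alpham (IB, v) \<le> q_cond ?Q IB" using qb by (simp add: alpham_def)
  have H: "st (run ?Q S' SB ((live, prm, tau), alpha) ?N v) IA = st (run ?Q S' SB ((live, prm, tau), alpham) ?N v) IA" for S' v
    using H_run[OF okr okm eqA accB, of S' SB live prm tau ?N v] unfolding Hrel_def by simp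
  have keyS: "key s \<noteq> None \<longleftrightarrow> st s IA = Adopted" for s unfolding key_def by simp
  have U: "st (run ?Q (S \<union> T) SB ((live, prm, tau), alpham) ?N v) IA = Adopted \<longleftrightarrow>
      st (run ?Q S SB ((live, prm, tau), alpham) ?N v) IA = Adopted \<or> st (run ?Q T SB ((live, prm, tau), alpham) ?N v) IA = Adopted" for v
  proof -
    let ?R1 = "run ?Q (S \<union> T) SB ((live, prm, tau), alpham) ?N v"
    let ?R2 = "run ?Q S SB ((live, prm, tau), alpham) ?N v"
    let ?R3 = "run ?Q T SB ((live, prm, tau), alpham) ?N v"
    have m2: "Mo ?R1 ?R2" by (rule M_run[OF okm accB]) simp
    have m3: "Mo ?R1 ?R3" by (rule M_run[OF okm accB]) simp
    have j: "J ?R1 ?R2 ?R3" by (rule J_run[OF okm accB])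
    have o2: "ole (key ?R1) (key ?R2)" "ole (key ?R1) (key ?R3)" using m2 m3 unfolding Mo_def by auto
    show ?thesis
    proof
      assume "st ?R1 IA = Adopted"
      then have "key ?R1 = key ?R2 \<or> key ?R1 = key ?R3" "key ?R1 \<noteq> None" using j keyS unfolding J_def by auto
      then show "st ?R2 IA = Adopted \<or> st ?R3 IA = Adopted" using keyS[of ?R1] keyS[of ?R2] keyS[of ?R3] by auto
    next
      assume "st ?R2 IA = Adopted \<or> st ?R3 IA = Adopted"
      then have "key ?R2 \<noteq> None \<or> key ?R3 \<noteq> None" using keyS by auto
      then have "key ?R1 \<noteq> None" using o2 by (cases "key ?R1"; cases "key ?R2"; cases "key ?R3") auto
      then show "st ?R1 IA = Adopted" using keyS by simp
    qed
  qed
  have "st (run ?Q (S \<union> T) SB ((live, prm, tau), alpha) ?N v) IA = Adopted \<longleftrightarrow>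
      st (run ?Q S SB ((live, prm, tau), alpha) ?N v) IA = Adopted \<or> st (run ?Q T SB ((live, prm, tau), alpha) ?N v) IA = Adopted" for v
    using U[of v] H[of "S \<union> T" v] H[of S v] H[of T v] by simp
  then show ?thesis unfolding final_state_eq by blast
qed

lemma card_union_diff: "finite A \<Longrightarrow> finite B \<Longrightarrow> card (A \<union> B) = card A + card (B - A)"
proof -
  assume f: "finite A" "finite B"
  have "A \<union> B = A \<union> (B - A)" by auto
  moreover have "card (A \<union> (B - A)) = card A + card (B - A)" using f by (intro card_Un_disjoint) auto
  ultimately show ?thesis by simp
qed

lemma world_submod:
  fixes w :: "'v::finite world"
  assumes a01: "\<forall>i. snd w i \<in> {0..1}" and qb: "0 \<le> qBA" and ST: "S \<subseteq> T" and x: "x \<notin> T"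
  shows "gfun (1, qAB, 1, qBA) (insert x S) SB w - gfun (1, qAB, 1, qBA) S SB w \<ge>
         gfun (1, qAB, 1, qBA) (insert x T) SB w - gfun (1, qAB, 1, qBA) T SB w"
proof -
  obtain live prm tau alpha where w: "w = ((live, prm, tau), alpha)" by (metis prod.exhaust)
  define A where "A S' = {v. st (final_state (1, qAB, 1, qBA) S' SB w v) IA = Adopted}" for S'
  have un: "A (S' \<union> T') = A S' \<union> A T'" for S' T'
    unfolding A_def w by (rule world_union) (use a01 qb w in auto)
  have g: "gfun (1, qAB, 1, qBA) S' SB w = real (card (A S'))" for S' unfolding gfun_def A_def ..
  have i: "insert x S = S \<union> {x}" "insert x T = T \<union> {x}" by auto
  have "T = S \<union> (T - S)" using ST by auto
  then have "A T = A S \<union> A (T - S)" using un[of S "T - S"] by simp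
  then have sub: "A S \<subseteq> A T" by blast
  have f: "finite (A S')" for S' by simp
  have c: "card (A {x} - A T) \<le> card (A {x} - A S)" using sub by (intro card_mono) auto
  have e1: "gfun (1, qAB, 1, qBA) (insert x S) SB w = real (card (A S)) + real (card (A {x} - A S))"
    unfolding g i(1) un card_union_diff[OF f f] by simp
  have e2: "gfun (1, qAB, 1, qBA) (insert x T) SB w = real (card (A T)) + real (card (A {x} - A T))"
    unfolding g i(2) un card_union_diff[OF f f] by simp
  have c': "real (card (A {x} - A T)) \<le> real (card (A {x} - A S))" using c by simp
  show ?thesis using e1 e2 c' g[of S] g[of T] by linarith
qed

theorem mainTheorem9:
  fixes E :: "('v::finite \<times> 'v) set" and p :: "'v \<times> 'v \<Rightarrow> real"
    and qAB qBA :: real and SB :: "'v set"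
  assumes "\<forall>e\<in>E. 0 \<le> p e \<and> p e \<le> 1"
    and "0 \<le> qAB" and "qAB \<le> 1" and "0 \<le> qBA" and "qBA \<le> 1"
  shows "submodular (\<lambda>SA. sigmaA E p (1, qAB, 1, qBA) SA SB)"
  unfolding submodular_def
proof (intro allI impI, elim conjE)
  fix S T :: "'v set" and x assume ST: "S \<subseteq> T" and x: "x \<notin> T"
  let ?Q = "(1, qAB, 1, qBA) :: gaps"
  let ?W = "world_measure E p"
  have sg: "sigmaA E p ?Q S' SB = integral\<^sup>L ?W (gfun ?Q S' SB)" for S'
    unfolding sigmaA_def gfun_def ..
  let ?h = "\<lambda>w. gfun ?Q (insert x S) SB w - gfun ?Q S SB w - (gfun ?Q (insert x T) SB w - gfun ?Q T SB w)"
  have ae: "AE w in ?W. 0 \<le> ?h w"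
    using AE_unit[of E p]
  proof eventually_elim
    case (elim w)
    show ?case using world_submod[OF elim assms(4) ST x, of qAB SB] by simp
  qed
  have "0 \<le> integral\<^sup>L ?W ?h" by (rule integral_nonneg_AE[OF ae])
  also have "integral\<^sup>L ?W ?h = (integral\<^sup>L ?W (gfun ?Q (insert x S) SB) - integral\<^sup>L ?W (gfun ?Q S SB)) -
      (integral\<^sup>L ?W (gfun ?Q (insert x T) SB) - integral\<^sup>L ?W (gfun ?Q T SB))"
    using gfun_int[of E p ?Q] by (simp add: Bochner_Integration.integral_diff)
  finally show "sigmaA E p ?Q (insert x T) SB - sigmaA E p ?Q T SB \<le> sigmaA E p ?Q (insert x S) SB - sigmaA E p ?Q S SB"
    unfolding sg by simp
qed

end
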